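(* Run the distributed regularized primal-dual algorithm described in the context for $T$ iterations with stepsize $\alpha(t)=\frac{R}{\sqrt{t+1}}$ and regularization parameter $\eta>0$ satisfying $\eta\alpha(t)\le\frac12$. Then for every agent $i=1,\dots,n$ and every $T\ge 2$, \[ f(\widehat{x}_{i}(T))-f(x_{\ast})\leq \frac{RC\log(T)}{\sqrt{T}-1}, \] where \[ C=1+\frac52 mL^2R^2+20L^2\left(1+\frac{nm^{3/2}LR}{\eta}\right)^2\left(\frac{\log(T\sqrt{nT})}{1-\sigma_2(W)}\right)^{3/2}. \]
   Context: Norms are Euclidean. Problem: minimize $f(x)=\frac1n\sum_{i=1}^n f_i(x)$ over $\mathcal{X}=\{x\in\mathbb{R}^d: g_k(x)\le 0,\ k=1,\dots,m\}$; write $g=(g_1,\dots,g_m)^T$. Assumptions: $\mathcal{X}$ is non-empty, convex and compact; $R$ is the smallest radius with $\mathcal{X}\subseteq \mathbb{B}_d(R)=\{x:\|x\|\le R\}$; there is a Slater vector $\tilde x$ with $g_k(\tilde x)<0$ for all $k$; all $f_i$ and $g_k$ are convex on $\mathbb{B}_d(R)$ and all their subgradients there satisfy $\|\nabla f_i(x)\|\le L$, $\|\nabla g_k(x)\|\le L$. $x_\ast$ denotes an optimal solution. Agents $1,\dots,n$ are nodes of a connected graph $G=(V,E)$; $W\in\mathbb{R}^{n\times n}$ is doubly stochastic with $W_{ij}>0$ if $(i,j)\in E$ and $W_{ij}=0$ if $(i,j)\notin E$; $\sigma_2(W)$ is the second largest singular value of $W$. Regularized Lagrangian of agent $i$: $L_i(x,\lambda)=f_i(x)+\langle\lambda,g(x)\rangle-\frac{\eta}{2}\|\lambda\|^2$,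 with subgradients $\nabla_xL_i(x,\lambda)=\nabla f_i(x)+\sum_{k=1}^m\lambda_k\nabla g_k(x)$ and $\nabla_\lambda L_i(x,\lambda)=g(x)-\eta\lambda$. Algorithm: $x_i(0)=0$, $\lambda_i(0)=0$; for $t=0,1,2,\dots$: $y_i(t)=x_i(t)-\alpha(t)\nabla_xL_i(x_i(t),\lambda_i(t))$, $\gamma_i(t)=\lambda_i(t)+\alpha(t)\nabla_\lambda L_i(x_i(t),\lambda_i(t))$, $x_i(t+1)=\Pi_{\mathbb{B}_d(R)}(\sum_j W_{ij}y_j(t))$, $\lambda_i(t+1)=\Pi_{\mathbb{R}^m_+}(\sum_jW_{ij}\gamma_j(t))$, where $\Pi$ denotes Euclidean projection. The estimate is $\widehat{x}_i(T)=\sum_{t=0}^{T-1}\alpha(t)x_i(t)/\sum_{t=0}^{T-1}\alpha(t)$. *)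

theory Defs
  imports "HOL-Analysis.Analysis" "HOL-Computational_Algebra.Polynomial" "HOL-Library.Multiset"
begin

definition charpoly :: "real^'n^'n \<Rightarrow> real poly" where
  "charpoly A = det (\<chi> i j. (if i = j then [:0, 1:] else 0) - [:A $ i $ j:])"

(* Singular values of A (with multiplicity), in decreasing order:
   square roots of the eigenvalues of A^T A (all real and >= 0). *)
definition singular_values :: "real^'n^'n \<Rightarrow> real list" where
  "singular_values A = map sqrt (rev (sorted_list_of_multiset (proots (charpoly (transpose A ** A)))))"

definition sigma2 :: "real^'n^'n \<Rightarrow> real" where
  "sigma2 A = (if length (singular_values A) \<ge> 2 then singular_values A ! 1 else 0)"

definition nonneg_orthant :: "(real^'m) set" where
  "nonneg_orthant = {v. \<forall>k. 0 \<le> v $ k}"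

(* Df i x : the subgradient of f_i at x used by the algorithm;
   Dg k x : the subgradient of g_k at x used by the algorithm. *)
primrec pd_iter ::
  "real^'n^'n \<Rightarrow> real \<Rightarrow> real \<Rightarrow> (nat \<Rightarrow> real) \<Rightarrow>
   ('n \<Rightarrow> 'a::euclidean_space \<Rightarrow> 'a) \<Rightarrow> ('m::finite \<Rightarrow> 'a \<Rightarrow> real) \<Rightarrow> ('m \<Rightarrow> 'a \<Rightarrow> 'a) \<Rightarrow>
   nat \<Rightarrow> ('n \<Rightarrow> 'a) \<times> ('n \<Rightarrow> real^'m)" where
  "pd_iter W R \<eta> \<alpha> Df g Dg 0 = (\<lambda>i. 0, \<lambda>i. 0)"
| "pd_iter W R \<eta> \<alpha> Df g Dg (Suc t) =
     (let x = fst (pd_iter W R \<eta> \<alpha> Df g Dg t);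
          lam = snd (pd_iter W R \<eta> \<alpha> Df g Dg t);
          y = (\<lambda>i. x i - \<alpha> t *\<^sub>R (Df i (x i) + (\<Sum>k\<in>UNIV. (lam i $ k) *\<^sub>R Dg k (x i))));
          \<gamma> = (\<lambda>i. lam i + \<alpha> t *\<^sub>R ((\<chi> k. g k (x i)) - \<eta> *\<^sub>R lam i))
      in (\<lambda>i. closest_point (cball 0 R) (\<Sum>j\<in>UNIV. (W $ i $ j) *\<^sub>R y j),
          \<lambda>i. closest_point nonneg_orthant (\<Sum>j\<in>UNIV. (W $ i $ j) *\<^sub>R \<gamma> j)))"

definition pd_estimate ::
  "real^'n^'n \<Rightarrow> real \<Rightarrow> real \<Rightarrow> (nat \<Rightarrow> real) \<Rightarrow>
   ('n \<Rightarrow> 'a::euclidean_space \<Rightarrow> 'a) \<Rightarrow> ('m::finite \<Rightarrow> 'a \<Rightarrow> real) \<Rightarrow> ('m \<Rightarrow> 'a \<Rightarrow> 'a) \<Rightarrow>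
   'n \<Rightarrow> nat \<Rightarrow> 'a" where
  "pd_estimate W R \<eta> \<alpha> Df g Dg i T =
     (1 / (\<Sum>t<T. \<alpha> t)) *\<^sub>R (\<Sum>t<T. \<alpha> t *\<^sub>R fst (pd_iter W R \<eta> \<alpha> Df g Dg t) i)"

end

theory Submission
  imports Defs "HOL-Analysis.Harmonic_Numbers"
begin


lemma poly_det: fixes M :: "real poly^'n::finite^'n"
  shows "poly (det M) x = det (\<chi> i j. poly (M$i$j) x)"
  by (simp add: det_def poly_sum poly_prod)

lemma charpoly_eval: "poly (charpoly A) x = det (mat x - A)"
  unfolding charpoly_def poly_det
  by (rule arg_cong[where f=det]) (simp add: vec_eq_iff mat_def)

lemma sq_norm_sum_le:
  fixes w :: "'j \<Rightarrow> real" and z :: "'j \<Rightarrow> 'b::real_inner"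
  assumes "finite S" "\<forall>j\<in>S. 0 \<le> w j" "sum w S = 1"
  shows "(norm (\<Sum>j\<in>S. w j *\<^sub>R z j))\<^sup>2 \<le> (\<Sum>j\<in>S. w j * (norm (z j))\<^sup>2)"
proof -
  define c where "c = (\<Sum>j\<in>S. w j *\<^sub>R z j)"
  have "0 \<le> (\<Sum>j\<in>S. w j * (norm (z j - c))\<^sup>2)" by (intro sum_nonneg) (use assms in auto)
  also have "\<dots> = (\<Sum>j\<in>S. w j * (norm (z j))\<^sup>2) - 2 * (\<Sum>j\<in>S. w j * inner (z j) c) + (\<Sum>j\<in>S. w j) * (norm c)\<^sup>2"
    by (simp add: power2_norm_eq_inner inner_diff_left inner_diff_right inner_commute algebra_simps
        sum_distrib_left sum_distrib_right sum_subtractf sum.distrib)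
  also have "(\<Sum>j\<in>S. w j * inner (z j) c) = inner c c" by (simp add: c_def inner_sum_left)
  finally show ?thesis using assms by (simp add: c_def power2_norm_eq_inner)
qed

lemma sq_sum_le_real:
  fixes w a :: "'j \<Rightarrow> real"
  assumes "finite S" "\<forall>j\<in>S. 0 \<le> w j" "sum w S = 1"
  shows "(\<Sum>j\<in>S. w j * a j)\<^sup>2 \<le> (\<Sum>j\<in>S. w j * (a j)\<^sup>2)"
  using sq_norm_sum_le[OF assms, of a] by simp




lemma det_eq0_kernel:
  fixes M :: "real^'n::finite^'n"
  shows "det M = 0 \<longleftrightarrow> (\<exists>w. w \<noteq> 0 \<and> M *v w = 0)"
proof -
  have "det M \<noteq> 0 \<longleftrightarrow> inj ((*v) M)"
    using invertible_det_nz[of M] invertible_left_inverse[of M] matrix_left_invertible_injective[of M] by simp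
  also have "inj ((*v) M) \<longleftrightarrow> (\<forall>w. M *v w = 0 \<longrightarrow> w = 0)"
  proof
    assume "inj ((*v) M)" then show "\<forall>w. M *v w = 0 \<longrightarrow> w = 0"
      by (metis injD matrix_vector_mult_0_right)
  next
    assume h: "\<forall>w. M *v w = 0 \<longrightarrow> w = 0"
    show "inj ((*v) M)"
    proof (rule injI)
      fix x y assume "M *v x = M *v y"
      then have "M *v (x - y) = 0" by (simp add: matrix_vector_mult_diff_distrib)
      then show "x = y" using h by auto
    qed
  qed
  finally show ?thesis by auto
qed

lemma nsq_vec: "(norm (v::real^'n::finite))\<^sup>2 = (\<Sum>i\<in>UNIV. (v$i)\<^sup>2)"
  unfolding power2_norm_eq_inner by (simp add: inner_vec_def power2_eq_square)

lemma matx_mult: "(mat x - A) *v w = x *\<^sub>R w - A *v (w::real^'n::finite)"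
proof -
  have "(\<Sum>j\<in>UNIV. (if i = j then x else 0) * w$j) = x * w$i" for i
  proof -
    have "(\<Sum>j\<in>UNIV. (if i = j then x else 0) * w$j) = (\<Sum>j\<in>UNIV. if i = j then x * w$j else 0)"
      by (rule sum.cong) auto
    then show ?thesis by simp
  qed
  then show ?thesis
    by (simp add: matrix_vector_mult_diff_rdistrib) (simp add: vec_eq_iff matrix_vector_mult_def mat_def)
qed

lemma mm_diff_l: "(A::real^'n::finite^'m::finite) ** (B - C) = A ** B - A ** (C::real^'k::finite^'n)"
  by (simp add: vec_eq_iff matrix_matrix_mult_def sum_subtractf right_diff_distrib)

lemma mm_diff_r: "((A::real^'n::finite^'m::finite) - B) ** C = A ** C - B ** (C::real^'k::finite^'n)"
  by (simp add: vec_eq_iff matrix_matrix_mult_def sum_subtractf left_diff_distrib)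

lemma quad0:
  fixes a b :: real
  assumes h: "\<And>t. 2*t*a + t\<^sup>2*b \<le> 0"
  shows "a = 0"
proof (rule ccontr)
  assume a: "a \<noteq> 0"
  define B where "B = \<bar>b\<bar> + 1"
  have B: "B > 0" "\<bar>b\<bar> \<le> B" by (auto simp: B_def)
  define t where "t = a / (2*B)"
  have "2*t*a = a\<^sup>2 / B" using B by (simp add: t_def power2_eq_square field_simps)
  moreover have "t\<^sup>2 * b \<ge> - (t\<^sup>2 * B)"
  proof -
    have "-\<bar>b\<bar> \<le> b" by simp
    from mult_left_mono[OF this zero_le_power2[of t]]
    have "t\<^sup>2 * b \<ge> - (t\<^sup>2 * \<bar>b\<bar>)" by simp
    moreover have "t\<^sup>2 * \<bar>b\<bar> \<le> t\<^sup>2 * B" using B by (simp add: mult_left_mono)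
    ultimately show ?thesis by linarith
  qed
  moreover have "t\<^sup>2 * B = a\<^sup>2 / (4*B)" using B by (simp add: t_def power2_eq_square field_simps)
  ultimately have "2*t*a + t\<^sup>2*b \<ge> a\<^sup>2/B - a\<^sup>2/(4*B)" by linarith
  moreover have "a\<^sup>2/B - a\<^sup>2/(4*B) = 3*a\<^sup>2/(4*B)" using B by (simp add: field_simps)
  moreover have "3*a\<^sup>2/(4*B) > 0" using a B by simp
  ultimately show False using h[of t] by linarith
qed

lemma mult2:
  fixes A :: "real^'n::finite^'n" and v :: "real^'n"
  assumes Au: "A *v (\<chi> i. 1) = (\<chi> i. 1)" and Av: "A *v v = v" and ne: "v$i1 \<noteq> v$i2"
  shows "[:-1,1:]^2 dvd charpoly A"
proof -
  have i12: "i1 \<noteq> i2" using ne by auto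
  define P :: "real^'n^'n" where
    "P = (\<chi> r c. if c = i1 then 1 else if c = i2 then v$r else if r = c then 1 else 0)"
  have Pe1: "P *v axis i1 1 = (\<chi> i. 1)"
    by (simp add: matrix_vector_mult_basis column_def P_def vec_eq_iff)
  have Pe2: "P *v axis i2 1 = v"
    using i12 by (simp add: matrix_vector_mult_basis column_def P_def vec_eq_iff)
  have Pinj: "z = 0" if z: "P *v z = 0" for z
  proof -
    have comp: "(P *v z)$r = z$i1 + v$r * z$i2 + (if r \<noteq> i1 \<and> r \<noteq> i2 then z$r else 0)" for r
    proof -
      have "(P *v z)$r = (\<Sum>c\<in>UNIV. P$r$c * z$c)" by (simp add: matrix_vector_mult_def)
      also have "\<dots> = (\<Sum>c\<in>UNIV. (if c = i1 then z$i1 else 0) + (if c = i2 then v$r * z$i2 else 0)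
                     + (if c = r then (if r \<noteq> i1 \<and> r \<noteq> i2 then z$r else 0) else 0))"
        by (rule sum.cong) (auto simp: P_def i12)
      also have "\<dots> = z$i1 + v$r * z$i2 + (if r \<noteq> i1 \<and> r \<noteq> i2 then z$r else 0)"
        by (simp add: sum.distrib)
      finally show ?thesis .
    qed
    have e1: "z$i1 + v$i1 * z$i2 = 0" using comp[of i1] z by simp
    have e2: "z$i1 + v$i2 * z$i2 = 0" using comp[of i2] z i12 by simp
    have "(v$i1 - v$i2) * z$i2 = (z$i1 + v$i1 * z$i2) - (z$i1 + v$i2 * z$i2)" by (simp add: algebra_simps)
    then have "(v$i1 - v$i2) * z$i2 = 0" using e1 e2 by simp
    then have z2: "z$i2 = 0" using ne by simp
    then have z1: "z$i1 = 0" using e1 by simp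
    show "z = 0"
    proof (rule iffD2[OF vec_eq_iff], rule allI)
      fix r show "z$r = 0$r"
        using comp[of r] z z1 z2 by (cases "r = i1 \<or> r = i2") auto
    qed
  qed
  have "inj ((*v) P)"
  proof (rule injI)
    fix x y assume "P *v x = P *v y"
    then have "P *v (x - y) = 0" by (simp add: matrix_vector_mult_diff_distrib)
    then show "x = y" using Pinj[of "x - y"] by simp
  qed
  then obtain Q where QP: "Q ** P = mat 1" using matrix_left_invertible_injective by blast
  then have PQ: "P ** Q = mat 1" using matrix_left_right_inverse by blast
  define B where "B = Q ** A ** P"
  have dQP: "det Q * det P = 1" using det_mul[of Q P] QP by simp
  have matx: "mat x = x *\<^sub>R (mat 1 :: real^'n^'n)" for x
    by (simp add: vec_eq_iff mat_def)
  have detB: "det (mat x - A) = det (mat x - B)" for x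
  proof -
    have "Q ** (mat x - A) ** P = mat x - B"
      unfolding B_def mm_diff_l mm_diff_r
      by (subst (1 2) matx) (simp add: matrix_scalar_ac scalar_matrix_assoc[symmetric] QP matrix_mul_assoc)
    then have "det (mat x - B) = det Q * det (mat x - A) * det P" by (metis det_mul)
    then show ?thesis using dQP by (simp add: algebra_simps)
  qed
  have Bcol: "B$r$c = (if r = c then 1 else 0)" if c: "c = i1 \<or> c = i2" for r c
  proof -
    have "B *v axis c 1 = axis c 1"
    proof (cases "c = i1")
      case True
      have "B *v axis c 1 = Q *v (A *v (P *v axis c 1))"
        by (simp add: B_def matrix_vector_mul_assoc matrix_mul_assoc)
      also have "\<dots> = Q *v (P *v axis c 1)" using True Pe1 Au by simp
      also have "\<dots> = axis c 1" by (simp add: matrix_vector_mul_assoc QP)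
      finally show ?thesis .
    next
      case False
      then have cc: "c = i2" using c by simp
      have "B *v axis c 1 = Q *v (A *v (P *v axis c 1))"
        by (simp add: B_def matrix_vector_mul_assoc matrix_mul_assoc)
      also have "\<dots> = Q *v (P *v axis c 1)" using cc Pe2 Av by simp
      also have "\<dots> = axis c 1" by (simp add: matrix_vector_mul_assoc QP)
      finally show ?thesis .
    qed
    then have "(B *v axis c 1)$r = (axis c 1 :: real^'n)$r" by simp
    moreover have "(B *v axis c 1)$r = B$r$c" by (simp add: matrix_vector_mult_basis column_def)
    ultimately show ?thesis by (simp add: axis_def)
  qed
  define Cp :: "real poly^'n^'n" where
    "Cp = (\<chi> i j. if i = i2 then [:(if j = i2 then 1 else 0):] else if i = i1 then [:(if j = i1 then 1 else 0):]
             else (if j = i then [:0,1:] else 0) - [:B$j$i:])"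
  have key: "poly (charpoly A) x = poly ([:-1,1:]^2 * det Cp) x" for x
  proof -
    define T where "T = transpose (mat x - B)"
    have "poly (charpoly A) x = det T" unfolding charpoly_eval detB T_def det_transpose ..
    have Tij: "T$i$j = (if j = i then x else 0) - B$j$i" for i j
      by (simp add: T_def transpose_def mat_def)
    have T1: "T = (\<chi> i. if i = i1 then (x - 1) *s axis i1 1 else row i T)"
      by (auto simp: vec_eq_iff Tij Bcol axis_def row_def)
    have T2: "(\<chi> i. if i = i1 then axis i1 1 else row i T) =
          (\<chi> i. if i = i2 then (x - 1) *s axis i2 1 else (if i = i1 then axis i1 1 else row i T))"
      using i12 by (auto simp: vec_eq_iff Tij Bcol axis_def row_def)
    have T3: "(\<chi> i. if i = i2 then axis i2 1 else (if i = i1 then axis i1 1 else row i T)) =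
              (\<chi> i j. poly (Cp$i$j) x)"
      using i12 by (auto simp: vec_eq_iff Tij axis_def row_def Cp_def)
    have "det T = (x - 1) * det (\<chi> i. if i = i1 then axis i1 1 else row i T)"
      by (subst T1) (rule det_row_mul)
    also have "det (\<chi> i. if i = i1 then axis i1 1 else row i T) =
               (x - 1) * det (\<chi> i. if i = i2 then axis i2 1 else (if i = i1 then axis i1 1 else row i T))"
      by (subst T2) (rule det_row_mul)
    finally have "det T = (x-1)^2 * poly (det Cp) x"
      using T3 poly_det[of Cp x] by (simp add: power2_eq_square)
    then show ?thesis using \<open>poly (charpoly A) x = det T\<close> by (simp add: poly_mult)
  qed
  then have "charpoly A = [:-1,1:]^2 * det Cp" using poly_eq_poly_eq_iff by blast
  then show ?thesis by simp
qed




lemma norm_add_sq: "(norm (a + t *\<^sub>R b))\<^sup>2 = (norm a)\<^sup>2 + 2*t*inner a b + t\<^sup>2*(norm b)\<^sup>2"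
  for a b :: "'a::real_inner"
  unfolding power2_norm_eq_inner
  by (simp add: inner_add_left inner_add_right inner_commute[of b a] power2_eq_square algebra_simps)

lemma sigma2_ge:
  fixes W :: "real^'n::finite^'n"
  assumes f2: "size (filter_mset (\<lambda>y. \<mu> \<le> y) (proots (charpoly (transpose W ** W)))) \<ge> 2"
    and mu0: "0 \<le> \<mu>"
  shows "\<mu> \<le> (sigma2 W)\<^sup>2"
proof -
  define M where "M = proots (charpoly (transpose W ** W))"
  define s where "s = sorted_list_of_multiset M"
  define K where "K = length s"
  have ms: "mset s = M" and ss: "sorted s" by (simp_all add: s_def)
  have flen: "length (filter (\<lambda>y. \<mu> \<le> y) s) \<ge> 2"
    using f2 ms[symmetric] by (simp add: M_def) (metis mset_filter size_mset)
  have "length (filter (\<lambda>y. \<mu> \<le> y) s) \<le> length s" by (rule length_filter_le)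
  then have K2: "K \<ge> 2" using flen unfolding K_def by linarith
  have sv: "singular_values W = map sqrt (rev s)" by (simp add: singular_values_def s_def M_def)
  have sig: "sigma2 W = sqrt (s ! (K - 2))"
  proof -
    have "length (singular_values W) = K" by (simp add: sv K_def)
    then have "sigma2 W = sqrt (rev s ! 1)" using K2 by (simp add: sigma2_def sv)
    also have "rev s ! 1 = s ! (K - 2)" using K2 by (simp add: rev_nth K_def numeral_2_eq_2)
    finally show ?thesis .
  qed
  have geq: "\<mu> \<le> s ! (K - 2)"
  proof (rule ccontr)
    assume "\<not> \<mu> \<le> s ! (K - 2)"
    then have lt: "s ! (K - 2) < \<mu>" by simp
    have "{i. i < length s \<and> \<mu> \<le> s ! i} \<subseteq> {K - 1}"
    proof
      fix i assume i: "i \<in> {i. i < length s \<and> \<mu> \<le> s ! i}"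
      show "i \<in> {K - 1}"
      proof (rule ccontr)
        assume "i \<notin> {K - 1}"
        then have "i \<noteq> K - 1" by simp
        moreover have "i < K" using i unfolding K_def by simp
        ultimately have il: "i \<le> K - 2" by arith
        have "K - 2 < K" using K2 by arith
        then have "K - 2 < length s" by (simp add: K_def)
        then have "s ! i \<le> s ! (K - 2)" using sorted_nth_mono[OF ss il] by blast
        then show False using i lt by auto
      qed
    qed
    then have "card {i. i < length s \<and> \<mu> \<le> s ! i} \<le> card {K - 1}"
      by (intro card_mono) auto
    then have "card {i. i < length s \<and> \<mu> \<le> s ! i} \<le> 1" by simp
    then show False using flen by (simp add: length_filter_conv_card)
  qed
  then show ?thesis using sig mu0 by simp
qed

locale dstoch =
  fixes W :: "real^'n::finite^'n"
  assumes Wnn: "\<And>a b. W$a$b \<ge> 0"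
    and Wrow: "\<And>a. (\<Sum>b\<in>UNIV. W$a$b) = 1"
    and Wcol: "\<And>b. (\<Sum>a\<in>UNIV. W$a$b) = 1"
begin

lemma contr: "(norm (W *v w))\<^sup>2 \<le> (norm w)\<^sup>2"
proof -
  have "(norm (W *v w))\<^sup>2 = (\<Sum>i\<in>UNIV. (\<Sum>j\<in>UNIV. W$i$j * w$j)\<^sup>2)"
    by (simp add: nsq_vec matrix_vector_mult_def)
  also have "\<dots> \<le> (\<Sum>i\<in>UNIV. (\<Sum>j\<in>UNIV. W$i$j * (w$j)\<^sup>2))"
    by (intro sum_mono sq_sum_le_real) (auto simp: Wnn Wrow)
  also have "\<dots> = (\<Sum>j\<in>UNIV. (\<Sum>i\<in>UNIV. W$i$j) * (w$j)\<^sup>2)"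
    by (subst sum.swap) (simp add: sum_distrib_right)
  also have "\<dots> = (norm w)\<^sup>2" by (simp add: Wcol nsq_vec)
  finally show ?thesis .
qed

lemma AA_inner: "inner x ((transpose W ** W) *v y) = inner (W *v x) (W *v y)"
proof -
  have "(transpose W ** W) *v y = (W *v y) v* W" by (simp add: matrix_vector_mul_assoc[symmetric])
  have "inner x ((W *v y) v* W) = inner ((W *v y) v* W) x" by (rule inner_commute)
  also have "\<dots> = inner (W *v y) (W *v x)" by (rule dot_lmul_matrix)
  also have "\<dots> = inner (W *v x) (W *v y)" by (rule inner_commute)
  finally show ?thesis using \<open>(transpose W ** W) *v y = (W *v y) v* W\<close> by simp
qed

lemma W_one: "W *v (\<chi> i. 1) = (\<chi> i. 1)"
  by (simp add: vec_eq_iff matrix_vector_mult_def Wrow)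

lemma AA_one: "(transpose W ** W) *v (\<chi> i. 1) = (\<chi> i. 1)"
  by (simp add: matrix_vector_mul_assoc[symmetric] W_one vec_eq_iff vector_matrix_mult_def Wcol)

lemma W_sum: "(\<Sum>i\<in>UNIV. (W *v v)$i) = (\<Sum>i\<in>UNIV. v$i)"
  by (simp add: matrix_vector_mult_def sum.swap[of _ UNIV UNIV] sum_distrib_right[symmetric] Wcol)

lemma WT_sum: "(\<Sum>i\<in>UNIV. (transpose W *v v)$i) = (\<Sum>i\<in>UNIV. v$i)"
proof -
  have "(\<Sum>i\<in>UNIV. (transpose W *v v)$i) = (\<Sum>i\<in>UNIV. \<Sum>j\<in>UNIV. W$j$i * v$j)"
    by (simp add: matrix_vector_mult_def transpose_def)
  also have "\<dots> = (\<Sum>j\<in>UNIV. (\<Sum>i\<in>UNIV. W$j$i) * v$j)"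
    by (subst sum.swap) (simp add: sum_distrib_right)
  also have "\<dots> = (\<Sum>i\<in>UNIV. v$i)" by (simp add: Wrow)
  finally show ?thesis .
qed

lemma AA_sum: "(\<Sum>i\<in>UNIV. ((transpose W ** W) *v v)$i) = (\<Sum>i\<in>UNIV. v$i)"
  by (simp only: matrix_vector_mul_assoc[symmetric] WT_sum W_sum)

lemma charpoly_nz: "charpoly (transpose W ** W) \<noteq> 0"
proof
  assume h: "charpoly (transpose W ** W) = 0"
  have "det (mat 2 - transpose W ** W) = 0" using charpoly_eval[of "transpose W ** W" 2] h by simp
  then obtain w where w: "w \<noteq> 0" "(mat 2 - transpose W ** W) *v w = 0"
    using iffD1[OF det_eq0_kernel[of "mat 2 - transpose W ** W"]] by blast
  then have "(transpose W ** W) *v w = 2 *\<^sub>R w" by (simp add: matx_mult)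
  then have "inner w ((transpose W ** W) *v w) = 2 * (norm w)\<^sup>2" by (simp add: power2_norm_eq_inner)
  then have "2 * (norm w)\<^sup>2 = (norm (W *v w))\<^sup>2" by (simp add: AA_inner power2_norm_eq_inner)
  moreover have "(norm (W *v w))\<^sup>2 \<le> (norm w)\<^sup>2" by (rule contr)
  ultimately have "(norm w)\<^sup>2 \<le> 0" by linarith
  then have "(norm w)\<^sup>2 = 0" using zero_le_power2[of "norm w"] by linarith
  then have "norm w = 0" by simp
  then show False using w by simp
qed

lemma root_in: assumes "w \<noteq> 0" "(transpose W ** W) *v w = c *\<^sub>R w"
  shows "c \<in># proots (charpoly (transpose W ** W))"
proof -
  have "(mat c - transpose W ** W) *v w = 0" using assms by (simp add: matx_mult)
  then have "det (mat c - transpose W ** W) = 0"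
    by (intro iffD2[OF det_eq0_kernel[of "mat c - transpose W ** W"]]) (use assms(1) in blast)
  then have "poly (charpoly (transpose W ** W)) c = 0" by (simp add: charpoly_eval)
  then show ?thesis using charpoly_nz by simp
qed

lemma spectral:
  assumes sv: "(\<Sum>i\<in>UNIV. v$i) = 0"
  shows "(norm (W *v v))\<^sup>2 \<le> (sigma2 W)\<^sup>2 * (norm v)\<^sup>2"
proof (cases "CARD('n) = 1")
  case True
  then obtain a :: 'n where a: "UNIV = {a}" by (rule card_1_singletonE)
  have "v$i = 0" for i
  proof -
    have "i = a" using a by auto
    have s2: "(\<Sum>i\<in>UNIV. v$i) = (\<Sum>i\<in>{a}. v$i)" by (simp only: a)
    have s1: "(\<Sum>i\<in>{a}. v$i) = v$a" by simp
    have "v$a = 0" using s1 s2 sv by linarith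
    then show ?thesis using \<open>i = a\<close> by simp
  qed
  then have "v = 0" by (simp add: vec_eq_iff)
  then show ?thesis by simp
next
  case False
  obtain a :: 'n where True by simp
  have "UNIV \<noteq> {a}"
  proof
    assume u: "UNIV = {a}"
    have "CARD('n) = card {a}" by (simp only: u)
    then have "CARD('n) = 1" by simp
    with False show False by simp
  qed
  then obtain b :: 'n where ab: "b \<noteq> a" by blast
  define Z where "Z = {v::real^'n. (\<Sum>i\<in>UNIV. v$i) = 0} \<inter> sphere 0 1"
  have si: "{v::real^'n. (\<Sum>i\<in>UNIV. v$i) = 0} = {v. inner (\<chi> i. 1) v = 0}"
    by (simp add: inner_vec_def)
  have cZ: "compact Z" unfolding Z_def si
    by (intro closed_Int_compact compact_sphere closed_hyperplane)
  define d :: "real^'n" where "d = axis a 1 - axis b 1"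
  have "d$a = 1" using ab by (simp add: d_def axis_def)
  then have dnz: "d \<noteq> 0" by auto
  have dsum: "(\<Sum>i\<in>UNIV. d$i) = 0" using ab by (simp add: d_def axis_def sum_subtractf)
  have "(1 / norm d) *\<^sub>R d \<in> Z" using dnz dsum by (simp add: Z_def sum_divide_distrib[symmetric])
  then have nZ: "Z \<noteq> {}" by auto
  have cont: "continuous_on Z (\<lambda>v. (norm (W *v v))\<^sup>2)"
    by (rule continuous_on_power, rule continuous_on_norm, rule linear_continuous_on, rule matrix_vector_mul_bounded_linear)
  from continuous_attains_sup[OF cZ nZ cont] obtain v0
    where v0a: "v0 \<in> Z" and v0b: "\<forall>y\<in>Z. (norm (W *v y))\<^sup>2 \<le> (norm (W *v v0))\<^sup>2"
    by blast
  have v0: "v0 \<in> Z" "\<And>y. y \<in> Z \<Longrightarrow> (norm (W *v y))\<^sup>2 \<le> (norm (W *v v0))\<^sup>2"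
    using v0a v0b by auto
  define mu where "mu = (norm (W *v v0))\<^sup>2"
  have v0s: "(\<Sum>i\<in>UNIV. v0$i) = 0" and v0n: "norm v0 = 1" using v0(1) by (auto simp: Z_def)
  have hom: "(norm (W *v y))\<^sup>2 \<le> mu * (norm y)\<^sup>2" if ys: "(\<Sum>i\<in>UNIV. y$i) = 0" for y
  proof (cases "y = 0")
    case True then show ?thesis by simp
  next
    case False
    then have "(1 / norm y) *\<^sub>R y \<in> Z" using ys by (simp add: Z_def sum_divide_distrib[symmetric])
    then have "(norm (W *v ((1 / norm y) *\<^sub>R y)))\<^sup>2 \<le> mu" using v0(2) unfolding mu_def by blast
    moreover have "W *v ((1 / norm y) *\<^sub>R y) = (1 / norm y) *\<^sub>R (W *v y)"
      by (simp add: vec_eq_iff matrix_vector_mult_def sum_distrib_left algebra_simps)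
    ultimately have "(norm (W *v y))\<^sup>2 / (norm y)\<^sup>2 \<le> mu"
      by (simp add: power_divide)
    then show ?thesis using False by (simp add: field_simps)
  qed
  have mu0: "0 \<le> mu" by (simp add: mu_def)
  have mu1: "mu \<le> 1" using contr[of v0] v0n by (simp add: mu_def)
  define r where "r = (transpose W ** W) *v v0 - mu *\<^sub>R v0"
  have rs: "(\<Sum>i\<in>UNIV. r$i) = 0" by (simp add: r_def sum_subtractf AA_sum v0s sum_distrib_left[symmetric])
  have orth: "inner r w = 0" if ws: "(\<Sum>i\<in>UNIV. w$i) = 0" for w
  proof (rule quad0)
    fix t :: real
    have s0: "(\<Sum>i\<in>UNIV. (v0 + t *\<^sub>R w)$i) = 0" using v0s ws by (simp add: sum.distrib sum_distrib_left[symmetric])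
    have lin: "W *v (v0 + t *\<^sub>R w) = W *v v0 + t *\<^sub>R (W *v w)"
      by (simp add: vec_eq_iff matrix_vector_mult_def sum_distrib_left sum.distrib algebra_simps)
    have "(norm (W *v (v0 + t *\<^sub>R w)))\<^sup>2 \<le> mu * (norm (v0 + t *\<^sub>R w))\<^sup>2" using hom[OF s0] .
    moreover have "(norm (W *v (v0 + t *\<^sub>R w)))\<^sup>2 = mu + 2*t*inner (W *v v0) (W *v w) + t\<^sup>2 * (norm (W *v w))\<^sup>2"
      unfolding lin mu_def norm_add_sq by simp
    moreover have "(norm (v0 + t *\<^sub>R w))\<^sup>2 = 1 + 2*t*inner v0 w + t\<^sup>2 * (norm w)\<^sup>2"
      using v0n unfolding norm_add_sq by simp
    moreover have "inner (W *v v0) (W *v w) = inner r w + mu * inner v0 w"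
    proof -
      have e1: "inner r w = inner ((transpose W ** W) *v v0) w - mu * inner v0 w"
        by (simp add: r_def inner_diff_left)
      have e2: "inner ((transpose W ** W) *v v0) w = inner (W *v v0) (W *v w)"
        using AA_inner[of w v0] by (simp add: inner_commute)
      show ?thesis using e1 e2 by linarith
    qed
    ultimately show "2 * t * inner r w + t\<^sup>2 * ((norm (W *v w))\<^sup>2 - mu * (norm w)\<^sup>2) \<le> 0"
      by (simp add: algebra_simps)
  qed
  have "r = 0" using orth[OF rs] by simp
  then have eig: "(transpose W ** W) *v v0 = mu *\<^sub>R v0" by (simp add: r_def)
  have v0nz: "v0 \<noteq> 0" using v0n by auto
  have onenz: "(\<chi> i. (1::real)) \<noteq> (0::real^'n)" by (simp add: vec_eq_iff)
  have inmu: "mu \<in># proots (charpoly (transpose W ** W))" using root_in[OF v0nz eig] .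
  have in1: "1 \<in># proots (charpoly (transpose W ** W))" using root_in[OF onenz] AA_one by simp
  have sub: "{#mu, 1#} \<subseteq># proots (charpoly (transpose W ** W))"
  proof (cases "mu = 1")
    case False
    then show ?thesis using inmu in1 by (simp add: insert_subset_eq_iff in_diff_count)
  next
    case True
    have "\<exists>i1 i2. v0$i1 \<noteq> v0$i2"
    proof (rule ccontr)
      assume "\<not> (\<exists>i1 i2. v0$i1 \<noteq> v0$i2)"
      then have c: "\<And>i j. v0$i = v0$j" by auto
      obtain k where k: "v0$k \<noteq> 0" using v0nz by (auto simp: vec_eq_iff)
      have "(\<Sum>i\<in>UNIV. v0$i) = (\<Sum>i\<in>(UNIV::'n set). v0$k)" by (rule sum.cong[OF refl]) (rule c)
      then have "(\<Sum>i\<in>(UNIV::'n set). v0$k) = 0" using v0s by simp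
      then show False using k by simp
    qed
    then obtain i1 i2 where ne: "v0$i1 \<noteq> v0$i2" by blast
    have "[:-1,1:]^2 dvd charpoly (transpose W ** W)"
      using mult2[OF AA_one _ ne] eig True by simp
    then have "2 \<le> order 1 (charpoly (transpose W ** W))"
      using order_divides[of 1 2 "charpoly (transpose W ** W)"] charpoly_nz by blast
    then have "count (proots (charpoly (transpose W ** W))) 1 \<ge> 2" using charpoly_nz by simp
    then show ?thesis using True by (simp add: subseteq_mset_def)
  qed
  have "2 \<le> size (filter_mset (\<lambda>y. mu \<le> y) (proots (charpoly (transpose W ** W))))"
  proof -
    have "filter_mset (\<lambda>y. mu \<le> y) {#mu, 1#} = {#mu, 1#}" using mu1 by simp
    moreover have "filter_mset (\<lambda>y. mu \<le> y) {#mu, 1#} \<subseteq># filter_mset (\<lambda>y. mu \<le> y) (proots (charpoly (transpose W ** W)))"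
      using sub by (rule multiset_filter_mono)
    ultimately have "size {#mu, 1#} \<le> size (filter_mset (\<lambda>y. mu \<le> y) (proots (charpoly (transpose W ** W))))"
      by (metis size_mset_mono)
    then show ?thesis by simp
  qed
  then have "mu \<le> (sigma2 W)\<^sup>2" using sigma2_ge[OF _ mu0] by blast
  then show ?thesis using hom[OF sv] by (meson mult_right_mono order_trans zero_le_power2)
qed

end



lemma cp_orthant: "closest_point nonneg_orthant v = (\<chi> k. max 0 (v$k))" for v :: "real^'m::finite"
proof -
  have cvx: "convex (nonneg_orthant :: (real^'m) set)"
    unfolding convex_def nonneg_orthant_def by simp
  have cl: "closed (nonneg_orthant :: (real^'m) set)"
    unfolding nonneg_orthant_def by (rule closed_positive_orthant)
  have mem: "(\<chi> k. max 0 (v$k)) \<in> nonneg_orthant" by (simp add: nonneg_orthant_def)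
  have "dist v (\<chi> k. max 0 (v$k)) \<le> dist v z" if z: "z \<in> nonneg_orthant" for z
  proof -
    have "(dist v (\<chi> k. max 0 (v$k)))\<^sup>2 \<le> (dist v z)\<^sup>2"
    proof -
      have "(v$k - max 0 (v$k))\<^sup>2 \<le> (v$k - z$k)\<^sup>2" for k
      proof -
        have "0 \<le> z$k" using z by (simp add: nonneg_orthant_def)
        show ?thesis
        proof (cases "0 \<le> v$k")
          case True then show ?thesis by simp
        next
          case False
          have "(v$k - z$k)\<^sup>2 - (v$k)\<^sup>2 = z$k * (z$k - 2 * v$k)" by (simp add: power2_eq_square algebra_simps)
          also have "\<dots> \<ge> 0" using \<open>0 \<le> z$k\<close> False by simp
          finally show ?thesis using False by simp
        qed
      qed
      then show ?thesis unfolding dist_norm nsq_vec by (auto intro!: sum_mono)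
    qed
    then show ?thesis by (simp add: power_mono_iff)
  qed
  then show ?thesis using closest_point_unique[OF cvx cl mem] by auto
qed

lemma norm_sum_weighted_le:
  fixes w :: "'j \<Rightarrow> real" and z :: "'j \<Rightarrow> 'b::real_normed_vector"
  assumes "finite S" "\<forall>j\<in>S. 0 \<le> w j" "sum w S = 1" "\<forall>j\<in>S. norm (z j) \<le> B"
  shows "norm (\<Sum>j\<in>S. w j *\<^sub>R z j) \<le> B"
proof -
  have "norm (\<Sum>j\<in>S. w j *\<^sub>R z j) \<le> (\<Sum>j\<in>S. norm (w j *\<^sub>R z j))" by (rule norm_sum)
  also have "\<dots> \<le> (\<Sum>j\<in>S. w j * B)"
    using assms by (intro sum_mono) (simp add: mult_left_mono)
  also have "\<dots> = B" using assms by (simp add: sum_distrib_right[symmetric])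
  finally show ?thesis .
qed

locale pdset = dstoch W for W :: "real^'n::finite^'n" +
  fixes fi :: "'n \<Rightarrow> 'a::euclidean_space \<Rightarrow> real"
    and Df :: "'n \<Rightarrow> 'a \<Rightarrow> 'a"
    and g :: "'m::finite \<Rightarrow> 'a \<Rightarrow> real"
    and Dg :: "'m \<Rightarrow> 'a \<Rightarrow> 'a"
    and R L \<eta> :: real
    and \<alpha> :: "nat \<Rightarrow> real"
    and xstar :: 'a
  assumes R_pos: "R > 0"
    and Xball: "\<And>x. (\<forall>k. g k x \<le> 0) \<Longrightarrow> norm x \<le> R"
    and xs_feas: "\<And>k. g k xstar \<le> 0"
    and f_convex: "\<And>j. convex_on (cball 0 R) (fi j)"
    and Df_subgrad: "\<And>j x y. x \<in> cball 0 R \<Longrightarrow> y \<in> cball 0 R \<Longrightarrow>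
                       fi j y \<ge> fi j x + Df j x \<bullet> (y - x)"
    and Dg_subgrad: "\<And>k x y. x \<in> cball 0 R \<Longrightarrow> y \<in> cball 0 R \<Longrightarrow>
                       g k y \<ge> g k x + Dg k x \<bullet> (y - x)"
    and Df_bound: "\<And>j x. x \<in> cball 0 R \<Longrightarrow> norm (Df j x) \<le> L"
    and Dg_bound: "\<And>k x. x \<in> cball 0 R \<Longrightarrow> norm (Dg k x) \<le> L"
    and alpha_def: "\<And>t. \<alpha> t = R / sqrt (real t + 1)"
    and eta_pos: "\<eta> > 0"
    and eta_alpha: "\<And>t. \<eta> * \<alpha> t \<le> 1 / 2"
begin

definition "xs t = fst (pd_iter W R \<eta> \<alpha> Df g Dg t)"
definition "ls t = snd (pd_iter W R \<eta> \<alpha> Df g Dg t)"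
definition "gx t j = Df j (xs t j) + (\<Sum>k\<in>UNIV. (ls t j $ k) *\<^sub>R Dg k (xs t j))"

lemma xs0: "xs 0 = (\<lambda>i. 0)" and ls0: "ls 0 = (\<lambda>i. 0)"
  by (simp_all add: xs_def ls_def)

lemma xs_Suc: "xs (Suc t) i = closest_point (cball 0 R) (\<Sum>j\<in>UNIV. W$i$j *\<^sub>R (xs t j - \<alpha> t *\<^sub>R gx t j))"
  by (simp add: xs_def ls_def gx_def Let_def)

lemma ls_Suc: "ls (Suc t) i $ k = max 0 (\<Sum>j\<in>UNIV. W$i$j * (ls t j $ k + \<alpha> t * (g k (xs t j) - \<eta> * ls t j $ k)))"
  by (simp add: xs_def ls_def Let_def cp_orthant sum_component algebra_simps)

lemma R0: "R \<ge> 0" using R_pos by simp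

lemma alpha_pos: "\<alpha> t > 0" using R_pos by (simp add: alpha_def)

lemma alpha_mono: "s \<le> t \<Longrightarrow> \<alpha> t \<le> \<alpha> s"
  using R_pos by (simp add: alpha_def divide_left_mono)

lemma one_m_ae: "0 \<le> 1 - \<alpha> t * \<eta>" using eta_alpha[of t] by (simp add: mult.commute)

lemma L0: "L \<ge> 0"
proof -
  have "(0::'a) \<in> cball 0 R" using R0 by simp
  then show ?thesis using Df_bound[of 0] norm_ge_zero order_trans by blast
qed

lemma xstar_in: "xstar \<in> cball 0 R" using Xball xs_feas by simp

lemma xs_in: "xs t i \<in> cball 0 R"
proof (cases t)
  case 0 then show ?thesis using R0 by (simp add: xs0)
next
  case (Suc s)
  have ne: "cball (0::'a) R \<noteq> {}" using R0 by auto
  show ?thesis unfolding Suc xs_Suc by (rule closest_point_in_set[OF closed_cball ne])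
qed

lemma dist_ball: "x \<in> cball 0 R \<Longrightarrow> y \<in> cball 0 R \<Longrightarrow> norm (x - y) \<le> 2 * R"
  by (metis dist_norm mem_cball_0 norm_triangle_ineq4 order_trans add_mono mult_2)

lemma glip: "w \<in> cball 0 R \<Longrightarrow> z \<in> cball 0 R \<Longrightarrow> g k z \<le> g k w + L * norm (w - z)"
proof -
  assume w: "w \<in> cball 0 R" and z: "z \<in> cball 0 R"
  have "g k w \<ge> g k z + Dg k z \<bullet> (w - z)" by (rule Dg_subgrad[OF z w])
  moreover have "- (Dg k z \<bullet> (w - z)) \<le> L * norm (w - z)"
  proof -
    have "- (Dg k z \<bullet> (w - z)) \<le> norm (Dg k z) * norm (w - z)"
      using norm_cauchy_schwarz[of "- Dg k z" "w - z"] by simp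
    also have "\<dots> \<le> L * norm (w - z)" using Dg_bound[OF z] by (simp add: mult_right_mono)
    finally show ?thesis .
  qed
  ultimately show ?thesis by linarith
qed

lemma flip: "w \<in> cball 0 R \<Longrightarrow> z \<in> cball 0 R \<Longrightarrow> fi j z \<le> fi j w + L * norm (w - z)"
proof -
  assume w: "w \<in> cball 0 R" and z: "z \<in> cball 0 R"
  have "fi j w \<ge> fi j z + Df j z \<bullet> (w - z)" by (rule Df_subgrad[OF z w])
  moreover have "- (Df j z \<bullet> (w - z)) \<le> L * norm (w - z)"
  proof -
    have "- (Df j z \<bullet> (w - z)) \<le> norm (Df j z) * norm (w - z)"
      using norm_cauchy_schwarz[of "- Df j z" "w - z"] by simp
    also have "\<dots> \<le> L * norm (w - z)" using Df_bound[OF z] by (simp add: mult_right_mono)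
    finally show ?thesis .
  qed
  ultimately show ?thesis by linarith
qed

definition "Mg k = Sup (g k ` cball 0 R)"
definition "Mp k = max 0 (Mg k)"

lemma g_le_2LR: "z \<in> cball 0 R \<Longrightarrow> g k z \<le> 2 * L * R"
proof -
  assume z: "z \<in> cball 0 R"
  have "g k z \<le> g k xstar + L * norm (xstar - z)" by (rule glip[OF xstar_in z])
  also have "\<dots> \<le> 0 + L * (2 * R)"
    using xs_feas[of k] dist_ball[OF xstar_in z] L0 by (intro add_mono mult_left_mono) auto
  finally show ?thesis by simp
qed

lemma bdd_g: "bdd_above (g k ` cball 0 R)"
  using g_le_2LR by (auto intro!: bdd_aboveI)

lemma ne_ball: "cball (0::'a) R \<noteq> {}" using R0 by auto

lemma g_le_Mg: "z \<in> cball 0 R \<Longrightarrow> g k z \<le> Mg k"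
  unfolding Mg_def by (rule cSup_upper) (auto simp: bdd_g)

lemma Mg_le: "Mg k \<le> 2 * L * R"
  unfolding Mg_def using ne_ball g_le_2LR by (intro cSup_least) auto

lemma Mg_low: "z \<in> cball 0 R \<Longrightarrow> Mg k - 2 * L * R \<le> g k z"
proof -
  assume z: "z \<in> cball 0 R"
  have "Mg k \<le> g k z + 2 * L * R"
    unfolding Mg_def
  proof (rule cSup_least)
    show "g k ` cball 0 R \<noteq> {}" using ne_ball by simp
    fix y assume "y \<in> g k ` cball 0 R"
    then obtain w where w: "w \<in> cball 0 R" "y = g k w" by auto
    have "g k w \<le> g k z + L * norm (z - w)" by (rule glip[OF z w(1)])
    also have "\<dots> \<le> g k z + L * (2 * R)"
      using dist_ball[OF z w(1)] L0 by (intro add_left_mono mult_left_mono) auto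
    finally show "y \<le> g k z + 2 * L * R" using w by simp
  qed
  then show ?thesis by simp
qed

lemma Mp_ge0: "0 \<le> Mp k" by (simp add: Mp_def)
lemma Mp_le: "Mp k \<le> 2 * L * R" using Mg_le L0 R0 by (simp add: Mp_def)

lemma ls_bounds: "0 \<le> ls t i $ k \<and> ls t i $ k \<le> Mp k / \<eta>"
proof (induction t arbitrary: i)
  case 0 then show ?case using Mp_ge0 eta_pos by (simp add: ls0)
next
  case (Suc t)
  have tm: "ls t j $ k + \<alpha> t * (g k (xs t j) - \<eta> * ls t j $ k) \<le> Mp k / \<eta>" for j
  proof -
    have "ls t j $ k + \<alpha> t * (g k (xs t j) - \<eta> * ls t j $ k) = (1 - \<alpha> t * \<eta>) * ls t j $ k + \<alpha> t * g k (xs t j)"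
      by (simp add: algebra_simps)
    also have "\<dots> \<le> (1 - \<alpha> t * \<eta>) * (Mp k / \<eta>) + \<alpha> t * Mp k"
    proof (rule add_mono)
      show "(1 - \<alpha> t * \<eta>) * ls t j $ k \<le> (1 - \<alpha> t * \<eta>) * (Mp k / \<eta>)"
        using Suc.IH one_m_ae by (intro mult_left_mono) auto
      have "g k (xs t j) \<le> Mp k" using g_le_Mg[OF xs_in] by (simp add: Mp_def le_max_iff_disj)
      then show "\<alpha> t * g k (xs t j) \<le> \<alpha> t * Mp k" using alpha_pos[of t] by (simp add: mult_left_mono)
    qed
    also have "\<dots> = Mp k / \<eta>" using eta_pos by (simp add: field_simps)
    finally show ?thesis .
  qed
  have "(\<Sum>j\<in>UNIV. W$i$j * (ls t j $ k + \<alpha> t * (g k (xs t j) - \<eta> * ls t j $ k))) \<le> (\<Sum>j\<in>UNIV. W$i$j * (Mp k / \<eta>))"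
    using tm Wnn by (intro sum_mono mult_left_mono) auto
  also have "\<dots> = Mp k / \<eta>" unfolding sum_distrib_right[symmetric] Wrow by simp
  finally show ?case using Mp_ge0[of k] eta_pos by (simp add: ls_Suc)
qed

lemma ls_nn: "0 \<le> ls t i $ k" using ls_bounds by blast
lemma ls_le: "ls t i $ k \<le> 2 * L * R / \<eta>"
  using ls_bounds[of t i k] Mp_le[of k] eta_pos by (meson divide_right_mono less_imp_le order_trans)

lemma ls_zero: "Mg k \<le> 0 \<Longrightarrow> ls t i $ k = 0"
  using ls_bounds[of t i k] by (simp add: Mp_def)

definition "Gx = L + real CARD('m) * (2 * L * R / \<eta>) * L"

lemma gx_bound: "norm (gx t j) \<le> Gx"
proof -
  have "norm (gx t j) \<le> norm (Df j (xs t j)) + norm (\<Sum>k\<in>UNIV. (ls t j $ k) *\<^sub>R Dg k (xs t j))"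
    unfolding gx_def by (rule norm_triangle_ineq)
  also have "\<dots> \<le> L + (\<Sum>k\<in>(UNIV::'m set). (2 * L * R / \<eta>) * L)"
  proof (rule add_mono)
    show "norm (Df j (xs t j)) \<le> L" by (rule Df_bound[OF xs_in])
    have "norm (\<Sum>k\<in>UNIV. (ls t j $ k) *\<^sub>R Dg k (xs t j)) \<le> (\<Sum>k\<in>UNIV. norm ((ls t j $ k) *\<^sub>R Dg k (xs t j)))"
      by (rule norm_sum)
    also have "\<dots> \<le> (\<Sum>k\<in>(UNIV::'m set). (2 * L * R / \<eta>) * L)"
    proof (rule sum_mono)
      fix k :: 'm
      have "norm ((ls t j $ k) *\<^sub>R Dg k (xs t j)) = ls t j $ k * norm (Dg k (xs t j))"
        using ls_nn by simp
      also have "\<dots> \<le> (2 * L * R / \<eta>) * L"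
        using ls_nn ls_le Dg_bound[OF xs_in] L0 R0 eta_pos by (intro mult_mono) auto
      finally show "norm ((ls t j $ k) *\<^sub>R Dg k (xs t j)) \<le> (2 * L * R / \<eta>) * L" .
    qed
    finally show "norm (\<Sum>k\<in>UNIV. (ls t j $ k) *\<^sub>R Dg k (xs t j)) \<le> (\<Sum>k\<in>(UNIV::'m set). (2 * L * R / \<eta>) * L)" .
  qed
  also have "\<dots> = Gx" by (simp add: Gx_def)
  finally show ?thesis .
qed

lemma dual_grad: "Mg k > 0 \<Longrightarrow> \<bar>g k (xs t j) - \<eta> * ls t j $ k\<bar> \<le> 2 * L * R"
proof -
  assume M: "Mg k > 0"
  have u: "g k (xs t j) - \<eta> * ls t j $ k \<le> 2 * L * R"
    using g_le_2LR[OF xs_in] ls_nn[of t j k] eta_pos by (smt (verit) mult_nonneg_nonneg)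
  have "\<eta> * ls t j $ k \<le> Mg k"
    using ls_bounds[of t j k] M eta_pos by (simp add: Mp_def field_simps)
  then have l: "- (2 * L * R) \<le> g k (xs t j) - \<eta> * ls t j $ k"
    using Mg_low[OF xs_in, of k t j] by linarith
  show ?thesis using u l by linarith
qed

end



context pdset
begin

lemma ne_ball': "cball (0::'a) R \<noteq> {}" using R0 by auto

lemma primal_step_i:
  "(norm (xs (Suc t) i - xstar))\<^sup>2 \<le> (\<Sum>j\<in>UNIV. W$i$j * (norm (xs t j - \<alpha> t *\<^sub>R gx t j - xstar))\<^sup>2)"
proof -
  define v where "v = (\<Sum>j\<in>UNIV. W$i$j *\<^sub>R (xs t j - \<alpha> t *\<^sub>R gx t j))"
  have "dist (closest_point (cball 0 R) v) (closest_point (cball 0 R) xstar) \<le> dist v xstar"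
    by (rule closest_point_lipschitz[OF convex_cball closed_cball ne_ball'])
  then have n1: "norm (xs (Suc t) i - xstar) \<le> norm (v - xstar)"
    using closest_point_self[OF xstar_in] by (simp add: xs_Suc v_def dist_norm)
  have "v - xstar = (\<Sum>j\<in>UNIV. W$i$j *\<^sub>R (xs t j - \<alpha> t *\<^sub>R gx t j - xstar))"
    by (simp add: v_def scaleR_diff_right sum_subtractf scaleR_sum_left[symmetric] Wrow)
  then have n2: "(norm (v - xstar))\<^sup>2 \<le> (\<Sum>j\<in>UNIV. W$i$j * (norm (xs t j - \<alpha> t *\<^sub>R gx t j - xstar))\<^sup>2)"
    using sq_norm_sum_le[of UNIV "\<lambda>j. W$i$j"] Wnn Wrow by simp
  have "(norm (xs (Suc t) i - xstar))\<^sup>2 \<le> (norm (v - xstar))\<^sup>2"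
    using n1 by (simp add: power_mono)
  then show ?thesis using n2 by linarith
qed

lemma primal_sum:
  "(\<Sum>i\<in>UNIV. (norm (xs (Suc t) i - xstar))\<^sup>2) \<le> (\<Sum>j\<in>UNIV. (norm (xs t j - \<alpha> t *\<^sub>R gx t j - xstar))\<^sup>2)"
proof -
  have "(\<Sum>i\<in>UNIV. (norm (xs (Suc t) i - xstar))\<^sup>2) \<le> (\<Sum>i\<in>UNIV. \<Sum>j\<in>UNIV. W$i$j * (norm (xs t j - \<alpha> t *\<^sub>R gx t j - xstar))\<^sup>2)"
    by (intro sum_mono primal_step_i)
  also have "\<dots> = (\<Sum>j\<in>UNIV. (\<Sum>i\<in>UNIV. W$i$j) * (norm (xs t j - \<alpha> t *\<^sub>R gx t j - xstar))\<^sup>2)"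
    by (subst sum.swap) (simp add: sum_distrib_right)
  also have "\<dots> = (\<Sum>j\<in>UNIV. (norm (xs t j - \<alpha> t *\<^sub>R gx t j - xstar))\<^sup>2)" by (simp add: Wcol)
  finally show ?thesis .
qed

lemma y_expand: "(norm (xs t j - \<alpha> t *\<^sub>R gx t j - xstar))\<^sup>2 =
   (norm (xs t j - xstar))\<^sup>2 - 2 * \<alpha> t * inner (xs t j - xstar) (gx t j) + (\<alpha> t)\<^sup>2 * (norm (gx t j))\<^sup>2"
proof -
  have "xs t j - \<alpha> t *\<^sub>R gx t j - xstar = (xs t j - xstar) + (- \<alpha> t) *\<^sub>R gx t j" by (simp add: algebra_simps)
  then show ?thesis by (simp only: norm_add_sq) simp
qed

lemma inner_lb: "inner (xs t j - xstar) (gx t j) \<ge> fi j (xs t j) - fi j xstar + (\<Sum>k\<in>UNIV. ls t j $ k * g k (xs t j))"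
proof -
  have e: "inner (xs t j - xstar) (gx t j) = inner (Df j (xs t j)) (xs t j - xstar) + (\<Sum>k\<in>UNIV. ls t j $ k * inner (Dg k (xs t j)) (xs t j - xstar))"
    by (simp add: gx_def inner_add_right inner_sum_right inner_commute)
  have a: "inner (Df j (xs t j)) (xs t j - xstar) \<ge> fi j (xs t j) - fi j xstar"
  proof -
    have "fi j xstar \<ge> fi j (xs t j) + inner (Df j (xs t j)) (xstar - xs t j)" by (rule Df_subgrad[OF xs_in xstar_in])
    moreover have "inner (Df j (xs t j)) (xstar - xs t j) = - inner (Df j (xs t j)) (xs t j - xstar)"
      by (simp add: inner_diff_right)
    ultimately show ?thesis by linarith
  qed
  have b: "ls t j $ k * inner (Dg k (xs t j)) (xs t j - xstar) \<ge> ls t j $ k * g k (xs t j)" for k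
  proof -
    have "g k xstar \<ge> g k (xs t j) + inner (Dg k (xs t j)) (xstar - xs t j)" by (rule Dg_subgrad[OF xs_in xstar_in])
    moreover have "inner (Dg k (xs t j)) (xstar - xs t j) = - inner (Dg k (xs t j)) (xs t j - xstar)"
      by (simp add: inner_diff_right)
    ultimately have "inner (Dg k (xs t j)) (xs t j - xstar) \<ge> g k (xs t j)" using xs_feas[of k] by linarith
    then show ?thesis using ls_nn by (simp add: mult_left_mono)
  qed
  have "(\<Sum>k\<in>UNIV. ls t j $ k * inner (Dg k (xs t j)) (xs t j - xstar)) \<ge> (\<Sum>k\<in>UNIV. ls t j $ k * g k (xs t j))"
    using b by (intro sum_mono) auto
  then show ?thesis using e a by linarith
qed

lemma maxsq: "(max 0 (s::real))\<^sup>2 \<le> s\<^sup>2" by (cases "0 \<le> s") (auto simp: max_def)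

lemma dual_k: "(\<Sum>i\<in>UNIV. (ls (Suc t) i $ k)\<^sup>2) \<le>
   (\<Sum>j\<in>UNIV. (ls t j $ k)\<^sup>2 + 2 * \<alpha> t * (ls t j $ k * g k (xs t j)) + (\<alpha> t)\<^sup>2 * (4 * L\<^sup>2 * R\<^sup>2))"
proof (cases "Mg k \<le> 0")
  case True
  then have "(\<Sum>i\<in>UNIV. (ls (Suc t) i $ k)\<^sup>2) = 0" using ls_zero by simp
  moreover have "(\<Sum>j\<in>UNIV. (ls t j $ k)\<^sup>2 + 2 * \<alpha> t * (ls t j $ k * g k (xs t j)) + (\<alpha> t)\<^sup>2 * (4 * L\<^sup>2 * R\<^sup>2)) \<ge> 0"
    using ls_zero[OF True] by (intro sum_nonneg) simp
  ultimately show ?thesis by simp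
next
  case False
  then have M: "Mg k > 0" by simp
  define gam where "gam j = ls t j $ k + \<alpha> t * (g k (xs t j) - \<eta> * ls t j $ k)" for j
  have s1: "(ls (Suc t) i $ k)\<^sup>2 \<le> (\<Sum>j\<in>UNIV. W$i$j * (gam j)\<^sup>2)" for i
  proof -
    have "(ls (Suc t) i $ k)\<^sup>2 \<le> (\<Sum>j\<in>UNIV. W$i$j * gam j)\<^sup>2"
      unfolding ls_Suc gam_def by (rule maxsq)
    also have "\<dots> \<le> (\<Sum>j\<in>UNIV. W$i$j * (gam j)\<^sup>2)"
      using Wnn Wrow by (intro sq_sum_le_real) auto
    finally show ?thesis .
  qed
  have "(\<Sum>i\<in>UNIV. (ls (Suc t) i $ k)\<^sup>2) \<le> (\<Sum>i\<in>UNIV. \<Sum>j\<in>UNIV. W$i$j * (gam j)\<^sup>2)"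
    by (intro sum_mono s1)
  also have "\<dots> = (\<Sum>j\<in>UNIV. (gam j)\<^sup>2)"
    by (subst sum.swap) (simp add: sum_distrib_right[symmetric] Wcol)
  also have "\<dots> \<le> (\<Sum>j\<in>UNIV. (ls t j $ k)\<^sup>2 + 2 * \<alpha> t * (ls t j $ k * g k (xs t j)) + (\<alpha> t)\<^sup>2 * (4 * L\<^sup>2 * R\<^sup>2))"
  proof (rule sum_mono)
    fix j
    define l where "l = ls t j $ k"
    define d where "d = g k (xs t j) - \<eta> * ls t j $ k"
    have l0: "0 \<le> l" using ls_nn by (simp add: l_def)
    have dd: "\<bar>d\<bar> \<le> 2 * L * R" using dual_grad[OF M] by (simp add: d_def)
    have "d\<^sup>2 \<le> (2 * L * R)\<^sup>2" using dd by (metis abs_ge_zero power2_abs power_mono)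
    then have d2: "d\<^sup>2 \<le> 4 * L\<^sup>2 * R\<^sup>2" by (simp add: power_mult_distrib)
    have ld: "l * d \<le> l * g k (xs t j)" using l0 eta_pos by (simp add: d_def l_def right_diff_distrib)
    have "(gam j)\<^sup>2 = l\<^sup>2 + 2 * \<alpha> t * (l * d) + (\<alpha> t)\<^sup>2 * d\<^sup>2"
      by (simp add: gam_def l_def d_def power2_eq_square algebra_simps)
    also have "\<dots> \<le> l\<^sup>2 + 2 * \<alpha> t * (l * g k (xs t j)) + (\<alpha> t)\<^sup>2 * (4 * L\<^sup>2 * R\<^sup>2)"
    proof -
      have "2 * \<alpha> t * (l * d) \<le> 2 * \<alpha> t * (l * g k (xs t j))"
        using mult_left_mono[OF ld, of "2 * \<alpha> t"] alpha_pos[of t] by simp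
      moreover have "(\<alpha> t)\<^sup>2 * d\<^sup>2 \<le> (\<alpha> t)\<^sup>2 * (4 * L\<^sup>2 * R\<^sup>2)"
        using mult_left_mono[OF d2, of "(\<alpha> t)\<^sup>2"] by simp
      ultimately show ?thesis by linarith
    qed
    finally show "(gam j)\<^sup>2 \<le> (ls t j $ k)\<^sup>2 + 2 * \<alpha> t * (ls t j $ k * g k (xs t j)) + (\<alpha> t)\<^sup>2 * (4 * L\<^sup>2 * R\<^sup>2)"
      by (simp add: l_def)
  qed
  finally show ?thesis .
qed

definition "Phi t = (\<Sum>i\<in>UNIV. (norm (xs t i - xstar))\<^sup>2) + (\<Sum>i\<in>UNIV. \<Sum>k\<in>UNIV. (ls t i $ k)\<^sup>2)"
definition "Fd t = (\<Sum>j\<in>UNIV. fi j (xs t j) - fi j xstar)"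
definition "C1 = Gx\<^sup>2 + 4 * real CARD('m) * L\<^sup>2 * R\<^sup>2"

lemma per_j: "(norm (xs t j - \<alpha> t *\<^sub>R gx t j - xstar))\<^sup>2 +
    (\<Sum>k\<in>UNIV. (ls t j $ k)\<^sup>2 + 2 * \<alpha> t * (ls t j $ k * g k (xs t j)) + (\<alpha> t)\<^sup>2 * (4 * L\<^sup>2 * R\<^sup>2))
  \<le> (norm (xs t j - xstar))\<^sup>2 + (\<Sum>k\<in>UNIV. (ls t j $ k)\<^sup>2) - 2 * \<alpha> t * (fi j (xs t j) - fi j xstar) + (\<alpha> t)\<^sup>2 * C1"
proof -
  have A: "(\<Sum>k\<in>UNIV. (ls t j $ k)\<^sup>2 + 2 * \<alpha> t * (ls t j $ k * g k (xs t j)) + (\<alpha> t)\<^sup>2 * (4 * L\<^sup>2 * R\<^sup>2))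
      = (\<Sum>k\<in>UNIV. (ls t j $ k)\<^sup>2) + 2 * \<alpha> t * (\<Sum>k\<in>UNIV. ls t j $ k * g k (xs t j)) + (\<alpha> t)\<^sup>2 * (4 * real CARD('m) * L\<^sup>2 * R\<^sup>2)"
    by (simp add: sum.distrib sum_distrib_left)
  have B: "2 * \<alpha> t * inner (xs t j - xstar) (gx t j) \<ge> 2 * \<alpha> t * (fi j (xs t j) - fi j xstar + (\<Sum>k\<in>UNIV. ls t j $ k * g k (xs t j)))"
    using inner_lb alpha_pos[of t] by (intro mult_left_mono) auto
  have C: "(\<alpha> t)\<^sup>2 * (norm (gx t j))\<^sup>2 \<le> (\<alpha> t)\<^sup>2 * Gx\<^sup>2"
    using gx_bound by (intro mult_left_mono power_mono) auto
  show ?thesis unfolding y_expand A C1_def using B C by (simp add: algebra_simps)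
qed

lemma Phi_step: "Phi (Suc t) \<le> Phi t - 2 * \<alpha> t * Fd t + (\<alpha> t)\<^sup>2 * (real CARD('n) * C1)"
proof -
  have "(\<Sum>i\<in>UNIV. \<Sum>k\<in>UNIV. (ls (Suc t) i $ k)\<^sup>2) = (\<Sum>k\<in>UNIV. \<Sum>i\<in>UNIV. (ls (Suc t) i $ k)\<^sup>2)"
    by (rule sum.swap)
  also have "\<dots> \<le> (\<Sum>k\<in>UNIV. \<Sum>j\<in>UNIV. (ls t j $ k)\<^sup>2 + 2 * \<alpha> t * (ls t j $ k * g k (xs t j)) + (\<alpha> t)\<^sup>2 * (4 * L\<^sup>2 * R\<^sup>2))"
    by (intro sum_mono dual_k)
  also have "\<dots> = (\<Sum>j\<in>UNIV. \<Sum>k\<in>UNIV. (ls t j $ k)\<^sup>2 + 2 * \<alpha> t * (ls t j $ k * g k (xs t j)) + (\<alpha> t)\<^sup>2 * (4 * L\<^sup>2 * R\<^sup>2))"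
    by (rule sum.swap)
  finally have D: "(\<Sum>i\<in>UNIV. \<Sum>k\<in>UNIV. (ls (Suc t) i $ k)\<^sup>2) \<le> \<dots>" .
  have "Phi (Suc t) \<le> (\<Sum>j\<in>UNIV. (norm (xs t j - \<alpha> t *\<^sub>R gx t j - xstar))\<^sup>2) +
    (\<Sum>j\<in>UNIV. \<Sum>k\<in>UNIV. (ls t j $ k)\<^sup>2 + 2 * \<alpha> t * (ls t j $ k * g k (xs t j)) + (\<alpha> t)\<^sup>2 * (4 * L\<^sup>2 * R\<^sup>2))"
    unfolding Phi_def using primal_sum[of t] D by linarith
  also have "\<dots> = (\<Sum>j\<in>UNIV. (norm (xs t j - \<alpha> t *\<^sub>R gx t j - xstar))\<^sup>2 +
    (\<Sum>k\<in>UNIV. (ls t j $ k)\<^sup>2 + 2 * \<alpha> t * (ls t j $ k * g k (xs t j)) + (\<alpha> t)\<^sup>2 * (4 * L\<^sup>2 * R\<^sup>2)))"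
    by (rule sum.distrib[symmetric])
  also have "\<dots> \<le> (\<Sum>j\<in>UNIV. (norm (xs t j - xstar))\<^sup>2 + (\<Sum>k\<in>UNIV. (ls t j $ k)\<^sup>2) - 2 * \<alpha> t * (fi j (xs t j) - fi j xstar) + (\<alpha> t)\<^sup>2 * C1)"
    by (intro sum_mono per_j)
  also have "\<dots> = Phi t - 2 * \<alpha> t * Fd t + (\<alpha> t)\<^sup>2 * (real CARD('n) * C1)"
    by (simp add: Phi_def Fd_def sum.distrib sum_subtractf sum_distrib_left algebra_simps)
  finally show ?thesis .
qed

lemma Phi_nn: "Phi t \<ge> 0" unfolding Phi_def by (intro add_nonneg_nonneg sum_nonneg) auto

lemma Phi0: "Phi 0 \<le> real CARD('n) * R\<^sup>2"
proof -
  have "Phi 0 = real CARD('n) * (norm xstar)\<^sup>2" by (simp add: Phi_def xs0 ls0)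
  also have "\<dots> \<le> real CARD('n) * R\<^sup>2"
    using xstar_in by (intro mult_left_mono power_mono) auto
  finally show ?thesis .
qed

lemma Phi_tele: "Phi T + 2 * (\<Sum>t<T. \<alpha> t * Fd t) \<le> Phi 0 + real CARD('n) * C1 * (\<Sum>t<T. (\<alpha> t)\<^sup>2)"
proof (induction T)
  case 0 then show ?case by simp
next
  case (Suc T)
  then show ?case using Phi_step[of T] by (simp add: algebra_simps)
qed

lemma opt_sum: "(\<Sum>t<T. \<alpha> t * Fd t) \<le> real CARD('n) * (R\<^sup>2 + C1 * (\<Sum>t<T. (\<alpha> t)\<^sup>2)) / 2"
  using Phi_tele[of T] Phi_nn[of T] Phi0 by (simp add: algebra_simps)

end



lemma tri_swap: "(\<Sum>t<T. \<Sum>s<t. f s t) = (\<Sum>s<T. \<Sum>t\<in>{Suc s..<T}. f s t)" for f :: "nat \<Rightarrow> nat \<Rightarrow> real"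
proof (induction T)
  case 0 then show ?case by simp
next
  case (Suc T)
  have "(\<Sum>s<Suc T. \<Sum>t\<in>{Suc s..<Suc T}. f s t) = (\<Sum>s<T. \<Sum>t\<in>{Suc s..<Suc T}. f s t)"
    by simp
  also have "\<dots> = (\<Sum>s<T. (\<Sum>t\<in>{Suc s..<T}. f s t) + f s T)"
    by (intro sum.cong refl) (simp add: atLeastLessThanSuc)
  also have "\<dots> = (\<Sum>s<T. \<Sum>t\<in>{Suc s..<T}. f s t) + (\<Sum>s<T. f s T)" by (simp add: sum.distrib)
  finally show ?case using Suc by simp
qed

lemma norm_sq_basis: "(norm x)\<^sup>2 = (\<Sum>b\<in>Basis. (inner x b)\<^sup>2)" for x :: "'a::euclidean_space"
  unfolding power2_norm_eq_inner by (subst euclidean_inner) (simp add: power2_eq_square)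

context pdset
begin

definition "Wop u = (\<lambda>i. \<Sum>j\<in>UNIV. W$i$j *\<^sub>R (u j :: 'a))"
definition "eps t i = xs (Suc t) i - Wop (xs t) i"
definition "ebar t = (1 / real CARD('n)) *\<^sub>R (\<Sum>j\<in>UNIV. eps t j)"
definition "Peps t i = eps t i - ebar t"
definition "xbar t = (1 / real CARD('n)) *\<^sub>R (\<Sum>j\<in>UNIV. xs t j)"
definition "dev t i = xs t i - xbar t"

lemma Ncard: "real CARD('n) \<ge> 1" by simp

lemma eps_bound: "norm (eps t i) \<le> \<alpha> t * Gx"
proof -
  define v where "v = (\<Sum>j\<in>UNIV. W$i$j *\<^sub>R (xs t j - \<alpha> t *\<^sub>R gx t j))"
  define z where "z = Wop (xs t) i"
  have zin: "z \<in> cball 0 R" unfolding z_def Wop_def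
    by (rule convex_sum) (use Wrow Wnn xs_in in auto)
  have "dist (closest_point (cball 0 R) v) (closest_point (cball 0 R) z) \<le> dist v z"
    by (rule closest_point_lipschitz[OF convex_cball closed_cball ne_ball'])
  then have "norm (eps t i) \<le> norm (v - z)"
    using closest_point_self[OF zin] by (simp add: eps_def xs_Suc v_def z_def dist_norm)
  also have "v - z = (\<Sum>j\<in>UNIV. W$i$j *\<^sub>R (- (\<alpha> t *\<^sub>R gx t j)))"
    by (simp add: v_def z_def Wop_def scaleR_diff_right sum_subtractf sum_negf)
  also have "norm \<dots> \<le> \<alpha> t * Gx"
    using Wnn Wrow gx_bound alpha_pos[of t]
    by (intro norm_sum_weighted_le) (auto simp: mult_left_mono)
  finally show ?thesis .
qed

lemma ebar_bound: "norm (ebar t) \<le> \<alpha> t * Gx"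
proof -
  have "ebar t = (\<Sum>j\<in>UNIV. (1 / real CARD('n)) *\<^sub>R eps t j)" unfolding ebar_def by (rule scaleR_sum_right)
  also have "norm \<dots> \<le> \<alpha> t * Gx"
    using eps_bound by (intro norm_sum_weighted_le) auto
  finally show ?thesis .
qed

lemma Peps_bound: "norm (Peps t i) \<le> 2 * (\<alpha> t * Gx)"
  using norm_triangle_ineq4[of "eps t i" "ebar t"] eps_bound[of t i] ebar_bound[of t]
  unfolding Peps_def by linarith

lemma Peps_sum: "(\<Sum>i\<in>UNIV. Peps t i) = 0"
  by (simp add: Peps_def ebar_def sum_subtractf sum_constant_scaleR)

lemma Peps_F: "(\<Sum>i\<in>UNIV. (norm (Peps t i))\<^sup>2) \<le> real CARD('n) * (\<alpha> t * Gx)\<^sup>2"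
proof -
  define e where "e = ebar t"
  have se: "(\<Sum>i\<in>UNIV. eps t i) = real CARD('n) *\<^sub>R e" by (simp add: e_def ebar_def)
  have "(\<Sum>i\<in>UNIV. (norm (Peps t i))\<^sup>2) = (\<Sum>i\<in>UNIV. (norm (eps t i))\<^sup>2 - 2 * inner (eps t i) e + (norm e)\<^sup>2)"
    unfolding Peps_def e_def[symmetric] power2_norm_eq_inner
    by (simp add: inner_diff_left inner_diff_right inner_commute algebra_simps)
  also have "\<dots> = (\<Sum>i\<in>UNIV. (norm (eps t i))\<^sup>2) - 2 * inner (\<Sum>i\<in>UNIV. eps t i) e + real CARD('n) * (norm e)\<^sup>2"
    by (simp add: sum.distrib sum_subtractf inner_sum_left sum_distrib_left)
  also have "\<dots> = (\<Sum>i\<in>UNIV. (norm (eps t i))\<^sup>2) - real CARD('n) * (norm e)\<^sup>2"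
    unfolding se by (simp add: power2_norm_eq_inner)
  also have "\<dots> \<le> (\<Sum>i\<in>UNIV. (norm (eps t i))\<^sup>2)" by simp
  also have "\<dots> \<le> (\<Sum>i\<in>(UNIV::'n set). (\<alpha> t * Gx)\<^sup>2)"
    using eps_bound by (intro sum_mono power_mono) auto
  finally show ?thesis by simp
qed

lemma Wop_sum: "finite S \<Longrightarrow> Wop (\<lambda>i. \<Sum>s\<in>S. f s i) = (\<lambda>i. \<Sum>s\<in>S. Wop (f s) i)"
  unfolding Wop_def by (rule ext) (simp add: scaleR_sum_right, rule sum.swap)

lemma Wop_sup: "(\<And>j. norm (u j) \<le> B) \<Longrightarrow> norm (Wop u i) \<le> B"
  unfolding Wop_def by (rule norm_sum_weighted_le) (auto simp: Wnn Wrow)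

lemma Wop_sup_iter: "(\<And>j. norm (u j) \<le> B) \<Longrightarrow> norm ((Wop ^^ k) u i) \<le> B"
proof (induction k arbitrary: i)
  case 0 then show ?case by simp
next
  case (Suc k) then show ?case by (simp add: Wop_sup)
qed

lemma Wop_sum0: "(\<Sum>i\<in>UNIV. u i) = 0 \<Longrightarrow> (\<Sum>i\<in>UNIV. Wop u i) = 0"
proof -
  assume h: "(\<Sum>i\<in>UNIV. u i) = 0"
  have "(\<Sum>i\<in>UNIV. Wop u i) = (\<Sum>j\<in>UNIV. (\<Sum>i\<in>UNIV. W$i$j) *\<^sub>R u j)"
    unfolding Wop_def by (subst sum.swap) (simp add: scaleR_sum_left)
  also have "\<dots> = 0" using h by (simp add: Wcol)
  finally show ?thesis .
qed

lemma Wop_F: assumes h: "(\<Sum>i\<in>UNIV. u i) = 0"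
  shows "(\<Sum>i\<in>UNIV. (norm (Wop u i))\<^sup>2) \<le> (sigma2 W)\<^sup>2 * (\<Sum>i\<in>UNIV. (norm (u i))\<^sup>2)"
proof -
  define w where "w b = (\<chi> j. inner (u j) b)" for b
  have ws: "(\<Sum>j\<in>UNIV. w b $ j) = 0" for b
    using h by (simp add: w_def inner_sum_left[symmetric])
  have Wv: "(W *v w b) $ i = inner (Wop u i) b" for b i
    by (simp add: w_def Wop_def matrix_vector_mult_def inner_sum_left)
  have "(\<Sum>i\<in>UNIV. (norm (Wop u i))\<^sup>2) = (\<Sum>i\<in>UNIV. \<Sum>b\<in>Basis. ((W *v w b) $ i)\<^sup>2)"
    by (simp add: norm_sq_basis Wv)
  also have "\<dots> = (\<Sum>b\<in>Basis. \<Sum>i\<in>UNIV. ((W *v w b) $ i)\<^sup>2)" by (rule sum.swap)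
  also have "\<dots> = (\<Sum>b\<in>Basis. (norm (W *v w b))\<^sup>2)" by (simp add: nsq_vec)
  also have "\<dots> \<le> (\<Sum>b\<in>Basis. (sigma2 W)\<^sup>2 * (norm (w b))\<^sup>2)"
    by (intro sum_mono spectral ws)
  also have "\<dots> = (sigma2 W)\<^sup>2 * (\<Sum>b\<in>Basis. \<Sum>i\<in>UNIV. (inner (u i) b)\<^sup>2)"
    by (simp add: sum_distrib_left[symmetric] nsq_vec w_def)
  also have "(\<Sum>b\<in>Basis. \<Sum>i\<in>UNIV. (inner (u i) b)\<^sup>2) = (\<Sum>i\<in>UNIV. \<Sum>b\<in>Basis. (inner (u i) b)\<^sup>2)"
    by (rule sum.swap)
  also have "\<dots> = (\<Sum>i\<in>UNIV. (norm (u i))\<^sup>2)" by (simp add: norm_sq_basis)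
  finally show ?thesis .
qed

lemma Wop_F_iter: assumes h: "(\<Sum>i\<in>UNIV. u i) = 0"
  shows "(\<Sum>i\<in>UNIV. (norm ((Wop ^^ k) u i))\<^sup>2) \<le> ((sigma2 W)\<^sup>2)^k * (\<Sum>i\<in>UNIV. (norm (u i))\<^sup>2)
     \<and> (\<Sum>i\<in>UNIV. (Wop ^^ k) u i) = 0"
proof (induction k)
  case 0 then show ?case using h by simp
next
  case (Suc k)
  have s0: "(\<Sum>i\<in>UNIV. (Wop ^^ k) u i) = 0" using Suc by blast
  have "(\<Sum>i\<in>UNIV. (norm ((Wop ^^ Suc k) u i))\<^sup>2) \<le> (sigma2 W)\<^sup>2 * (\<Sum>i\<in>UNIV. (norm ((Wop ^^ k) u i))\<^sup>2)"
    using Wop_F[OF s0] by simp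
  also have "\<dots> \<le> (sigma2 W)\<^sup>2 * (((sigma2 W)\<^sup>2)^k * (\<Sum>i\<in>UNIV. (norm (u i))\<^sup>2))"
    using Suc by (intro mult_left_mono) auto
  finally show ?case using Wop_sum0[OF s0] by (simp add: algebra_simps)
qed

definition "sig = sigma2 W"
definition "cc k = min 2 (sig ^ k * sqrt (real CARD('n)))"

lemma root_nn: "r \<in># proots (charpoly (transpose W ** W)) \<Longrightarrow> r \<ge> 0"
proof -
  assume "r \<in># proots (charpoly (transpose W ** W))"
  then have "poly (charpoly (transpose W ** W)) r = 0" using charpoly_nz by simp
  then have "det (mat r - transpose W ** W) = 0" by (simp add: charpoly_eval)
  then obtain w where w: "w \<noteq> 0" "(mat r - transpose W ** W) *v w = 0"
    using iffD1[OF det_eq0_kernel[of "mat r - transpose W ** W"]] by blast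
  then have "(transpose W ** W) *v w = r *\<^sub>R w" by (simp add: matx_mult)
  then have "inner w ((transpose W ** W) *v w) = r * (norm w)\<^sup>2" by (simp add: power2_norm_eq_inner)
  then have "r * (norm w)\<^sup>2 = (norm (W *v w))\<^sup>2" by (simp add: AA_inner power2_norm_eq_inner)
  then have "r * (norm w)\<^sup>2 \<ge> 0" by simp
  moreover have "(norm w)\<^sup>2 > 0" using w by simp
  ultimately show ?thesis by (simp add: zero_le_mult_iff)
qed

lemma sig_nn: "sig \<ge> 0"
proof -
  define s where "s = sorted_list_of_multiset (proots (charpoly (transpose W ** W)))"
  have "0 \<le> rev s ! 1" if "2 \<le> length s"
  proof -
    have "rev s ! 1 \<in> set (rev s)" using that by (intro nth_mem) simp
    then have "rev s ! 1 \<in># proots (charpoly (transpose W ** W))" by (simp add: s_def)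
    then show ?thesis by (rule root_nn)
  qed
  then show ?thesis by (simp add: sig_def sigma2_def singular_values_def s_def[symmetric])
qed

lemma cc_nn: "cc k \<ge> 0" using sig_nn by (simp add: cc_def)

lemma Gx_nn: "Gx \<ge> 0" using L0 R0 eta_pos by (simp add: Gx_def)

lemma iter_bound: "norm ((Wop ^^ k) (Peps s) i) \<le> \<alpha> s * Gx * cc k"
proof -
  have b1: "norm ((Wop ^^ k) (Peps s) i) \<le> 2 * (\<alpha> s * Gx)"
    by (rule Wop_sup_iter) (rule Peps_bound)
  have "(norm ((Wop ^^ k) (Peps s) i))\<^sup>2 \<le> (\<Sum>i\<in>UNIV. (norm ((Wop ^^ k) (Peps s) i))\<^sup>2)"
    by (rule member_le_sum) auto
  also have "\<dots> \<le> ((sig)\<^sup>2)^k * (\<Sum>i\<in>UNIV. (norm (Peps s i))\<^sup>2)"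
    using Wop_F_iter[OF Peps_sum] by (simp add: sig_def)
  also have "\<dots> \<le> ((sig)\<^sup>2)^k * (real CARD('n) * (\<alpha> s * Gx)\<^sup>2)"
    by (intro mult_left_mono Peps_F) auto
  also have "\<dots> = (sig ^ k * sqrt (real CARD('n)) * (\<alpha> s * Gx))\<^sup>2"
  proof -
    have "(sig ^ k)\<^sup>2 = (sig\<^sup>2)^k" by (simp only: power_mult[symmetric] mult.commute)
    then show ?thesis by (simp add: power_mult_distrib)
  qed
  finally have sq: "(norm ((Wop ^^ k) (Peps s) i))\<^sup>2 \<le> (sig ^ k * sqrt (real CARD('n)) * (\<alpha> s * Gx))\<^sup>2" .
  have b2: "norm ((Wop ^^ k) (Peps s) i) \<le> sig ^ k * sqrt (real CARD('n)) * (\<alpha> s * Gx)"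
    by (rule power2_le_imp_le[OF sq]) (use sig_nn alpha_pos[of s] Gx_nn in simp)
  have ag: "\<alpha> s * Gx \<ge> 0" using alpha_pos[of s] Gx_nn by simp
  show ?thesis
  proof (cases "2 \<le> sig ^ k * sqrt (real CARD('n))")
    case True
    then have "cc k = 2" by (simp add: cc_def)
    then show ?thesis using b1 by (simp add: algebra_simps)
  next
    case False
    then have "cc k = sig ^ k * sqrt (real CARD('n))" by (simp add: cc_def)
    then show ?thesis using b2 by (simp add: algebra_simps)
  qed
qed

lemma xbar_Suc: "xbar (Suc t) = xbar t + ebar t"
proof -
  have "(\<Sum>i\<in>UNIV. Wop (xs t) i) = (\<Sum>j\<in>UNIV. xs t j)"
    unfolding Wop_def by (subst sum.swap) (simp add: scaleR_sum_left[symmetric] Wcol)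
  moreover have "xs (Suc t) i = Wop (xs t) i + eps t i" for i by (simp add: eps_def)
  ultimately show ?thesis
    by (simp add: xbar_def ebar_def sum.distrib scaleR_add_right)
qed

lemma dev_rec: "dev (Suc t) i = Wop (dev t) i + Peps t i"
proof -
  have "Wop (dev t) i = Wop (xs t) i - xbar t"
    by (simp add: Wop_def dev_def scaleR_diff_right sum_subtractf scaleR_sum_left[symmetric] Wrow)
  then show ?thesis by (simp add: dev_def xbar_Suc eps_def Peps_def)
qed

lemma dev_closed: "dev t i = (\<Sum>s<t. (Wop ^^ (t - Suc s)) (Peps s) i)"
proof (induction t arbitrary: i)
  case 0 then show ?case by (simp add: dev_def xbar_def xs0)
next
  case (Suc t)
  have e: "dev t = (\<lambda>i. \<Sum>s<t. (Wop ^^ (t - Suc s)) (Peps s) i)" using Suc by auto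
  have "dev (Suc t) i = Wop (dev t) i + Peps t i" by (rule dev_rec)
  also have "Wop (dev t) i = (\<Sum>s<t. Wop ((Wop ^^ (t - Suc s)) (Peps s)) i)"
    unfolding e by (simp add: Wop_sum)
  also have "\<dots> = (\<Sum>s<t. (Wop ^^ (Suc t - Suc s)) (Peps s) i)"
  proof (rule sum.cong[OF refl])
    fix s assume "s \<in> {..<t}"
    then have e: "Suc t - Suc s = Suc (t - Suc s)" by auto
    show "Wop ((Wop ^^ (t - Suc s)) (Peps s)) i = (Wop ^^ (Suc t - Suc s)) (Peps s) i"
      by (simp only: e funpow.simps(2) o_apply)
  qed
  finally show ?case by simp
qed

definition "Dd t = Gx * (\<Sum>s<t. \<alpha> s * cc (t - Suc s))"

lemma dev_bound: "norm (dev t i) \<le> Dd t"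
proof -
  have "norm (dev t i) \<le> (\<Sum>s<t. norm ((Wop ^^ (t - Suc s)) (Peps s) i))"
    unfolding dev_closed by (rule norm_sum)
  also have "\<dots> \<le> (\<Sum>s<t. \<alpha> s * Gx * cc (t - Suc s))"
    by (intro sum_mono iter_bound)
  also have "\<dots> = Dd t" by (simp add: Dd_def sum_distrib_left algebra_simps)
  finally show ?thesis .
qed

lemma pair_bound: "norm (xs t i - xs t j) \<le> 2 * Dd t"
proof -
  have "xs t i - xs t j = dev t i - dev t j" by (simp add: dev_def)
  then have "norm (xs t i - xs t j) \<le> norm (dev t i) + norm (dev t j)" by (simp add: norm_triangle_ineq4)
  then show ?thesis using dev_bound[of t i] dev_bound[of t j] by linarith
qed

lemma cons_sum: "(\<Sum>t<T. \<alpha> t * Dd t) \<le> Gx * (\<Sum>s<T. (\<alpha> s)\<^sup>2) * (\<Sum>k<T. cc k)"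
proof -
  have eq: "(\<Sum>t<T. \<alpha> t * Dd t) = Gx * (\<Sum>t<T. \<Sum>s<t. \<alpha> t * (\<alpha> s * cc (t - Suc s)))"
    by (simp add: Dd_def sum_distrib_left algebra_simps)
  have "(\<Sum>t<T. \<Sum>s<t. \<alpha> t * (\<alpha> s * cc (t - Suc s))) \<le> (\<Sum>t<T. \<Sum>s<t. (\<alpha> s)\<^sup>2 * cc (t - Suc s))"
  proof (rule sum_mono)
    fix t :: nat assume "t \<in> {..<T}"
    show "(\<Sum>s<t. \<alpha> t * (\<alpha> s * cc (t - Suc s))) \<le> (\<Sum>s<t. (\<alpha> s)\<^sup>2 * cc (t - Suc s))"
    proof (rule sum_mono)
      fix s :: nat assume "s \<in> {..<t}"
      then have "\<alpha> t \<le> \<alpha> s" by (intro alpha_mono) auto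
      then have "\<alpha> t * \<alpha> s \<le> \<alpha> s * \<alpha> s" using alpha_pos[of s] by (simp add: mult_right_mono)
      then show "\<alpha> t * (\<alpha> s * cc (t - Suc s)) \<le> (\<alpha> s)\<^sup>2 * cc (t - Suc s)"
        using mult_right_mono[OF _ cc_nn[of "t - Suc s"]] by (metis mult.assoc power2_eq_square)
    qed
  qed
  also have "\<dots> = (\<Sum>s<T. \<Sum>t\<in>{Suc s..<T}. (\<alpha> s)\<^sup>2 * cc (t - Suc s))" by (rule tri_swap)
  also have "\<dots> \<le> (\<Sum>s<T. (\<alpha> s)\<^sup>2 * (\<Sum>k<T. cc k))"
  proof (intro sum_mono)
    fix s assume s: "s \<in> {..<T}"
    have "(\<Sum>t\<in>{Suc s..<T}. cc (t - Suc s)) = (\<Sum>t\<in>{0 + Suc s..<(T - Suc s) + Suc s}. cc (t - Suc s))"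
      using s by simp
    also have "\<dots> = (\<Sum>i\<in>{0..<T - Suc s}. cc i)" by (subst sum.shift_bounds_nat_ivl) simp
    also have "\<dots> \<le> (\<Sum>k<T. cc k)"
      using cc_nn by (intro sum_mono2) auto
    finally have "(\<Sum>t\<in>{Suc s..<T}. cc (t - Suc s)) \<le> (\<Sum>k<T. cc k)" .
    then show "(\<Sum>t\<in>{Suc s..<T}. (\<alpha> s)\<^sup>2 * cc (t - Suc s)) \<le> (\<alpha> s)\<^sup>2 * (\<Sum>k<T. cc k)"
      by (simp add: sum_distrib_left[symmetric] mult_left_mono)
  qed
  also have "\<dots> = (\<Sum>s<T. (\<alpha> s)\<^sup>2) * (\<Sum>k<T. cc k)" by (rule sum_distrib_right[symmetric])
  finally have "(\<Sum>t<T. \<Sum>s<t. \<alpha> t * (\<alpha> s * cc (t - Suc s))) \<le> (\<Sum>s<T. (\<alpha> s)\<^sup>2) * (\<Sum>k<T. cc k)" .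
  then have "Gx * (\<Sum>t<T. \<Sum>s<t. \<alpha> t * (\<alpha> s * cc (t - Suc s))) \<le> Gx * ((\<Sum>s<T. (\<alpha> s)\<^sup>2) * (\<Sum>k<T. cc k))"
    using Gx_nn by (rule mult_left_mono)
  then show ?thesis using eq by (simp add: mult.assoc)
qed

end



lemma H_bound: "T \<ge> 1 \<Longrightarrow> (\<Sum>t<T. 1 / (real t + 1)) \<le> 1 + ln (real T)"
proof (induction T rule: nat_induct_at_least)
  case base then show ?case by simp
next
  case (Suc n)
  have "1 / (real n + 1) \<le> ln (real n + 1) - ln (real n)"
  proof -
    have pos: "0 < real n / (real n + 1)" using Suc by simp
    have "ln (real n / (real n + 1)) \<le> real n / (real n + 1) - 1" by (rule ln_le_minus_one[OF pos])
    moreover have "ln (real n / (real n + 1)) = ln (real n) - ln (real n + 1)" using Suc by (simp add: ln_div)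
    moreover have "real n / (real n + 1) - 1 = - (1 / (real n + 1))" by (simp add: field_simps)
    ultimately show ?thesis by linarith
  qed
  then show ?case using Suc by (simp add: add.commute)
qed

lemma sqrt_step: "2 * (sqrt (x + 2) - sqrt (x + 1)) \<le> 1 / sqrt (x + 1)" if x: "x \<ge> 0" for x :: real
proof -
  define a where "a = sqrt (x + 1)"
  define b where "b = sqrt (x + 2)"
  have a0: "a > 0" using x by (simp add: a_def)
  have ab: "a \<le> b" using x by (simp add: a_def b_def)
  have "(b - a) * (b + a) = b * b - a * a" by (simp add: algebra_simps)
  also have "\<dots> = 1" using x by (simp add: a_def b_def)
  finally have e: "(b - a) * (b + a) = 1" .
  have "b - a = 1 / (b + a)" using e a0 ab by (simp add: field_simps)
  also have "\<dots> \<le> 1 / (2 * a)" using a0 ab by (intro divide_left_mono) auto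
  finally have "2 * (b - a) \<le> 1 / a" using a0 by (simp add: field_simps)
  then show ?thesis by (simp add: a_def b_def)
qed

lemma sqrt_sum_bound: "2 * (sqrt (real T + 1) - 1) \<le> (\<Sum>t<T. 1 / sqrt (real t + 1))"
proof (induction T)
  case 0 then show ?case by simp
next
  case (Suc T)
  have "2 * (sqrt (real T + 2) - sqrt (real T + 1)) \<le> 1 / sqrt (real T + 1)" by (rule sqrt_step) simp
  then show ?case using Suc by (simp add: add.commute)
qed

lemma geom_le: "0 \<le> s \<Longrightarrow> s < 1 \<Longrightarrow> (\<Sum>j<n. s^j) \<le> 1 / (1 - s)" for s :: real
  by (simp add: sum_gp_strict divide_right_mono)

lemma S_bound:
  fixes s Nr :: real
  assumes s0: "0 \<le> s" and s1: "s < 1" and N1: "Nr \<ge> 1"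
  shows "(\<Sum>k<T. min 2 (s^k * sqrt Nr)) \<le> 2 * (ln (sqrt Nr) / (1 - s) + 1) + 1 / (1 - s)"
proof -
  define \<kappa> where "\<kappa> = ln (sqrt Nr) / (1 - s)"
  have k0: "\<kappa> \<ge> 0" using N1 s1 by (simp add: \<kappa>_def)
  define K0 where "K0 = nat \<lceil>\<kappa>\<rceil>"
  have K0ge: "real K0 \<ge> \<kappa>" using k0 ceiling_correct[of \<kappa>] by (simp add: K0_def)
  have K0le: "real K0 \<le> \<kappa> + 1" using k0 ceiling_correct[of \<kappa>] by (simp add: K0_def)
  have sK0: "s ^ K0 * sqrt Nr \<le> 1"
  proof -
    have "s \<le> exp (s - 1)" using exp_ge_add_one_self[of "s - 1"] by simp
    then have "s ^ K0 \<le> exp (s - 1) ^ K0" using s0 by (intro power_mono) auto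
    also have "\<dots> = exp (real K0 * (s - 1))" by (simp add: exp_of_nat_mult)
    also have "\<dots> \<le> exp (\<kappa> * (s - 1))"
      using K0ge s1 by (simp add: mult_right_mono_neg)
    also have "\<kappa> * (s - 1) = - ln (sqrt Nr)" using s1 by (simp add: \<kappa>_def field_simps)
    also have "exp (- ln (sqrt Nr)) = 1 / sqrt Nr" using N1 by (simp add: exp_minus inverse_eq_divide)
    finally have "s ^ K0 \<le> 1 / sqrt Nr" .
    then show ?thesis using N1 by (simp add: field_simps)
  qed
  define M where "M = min T K0"
  have "(\<Sum>k<T. min 2 (s^k * sqrt Nr)) = (\<Sum>k\<in>{0..<M}. min 2 (s^k * sqrt Nr)) + (\<Sum>k\<in>{M..<T}. min 2 (s^k * sqrt Nr))"
    by (simp add: M_def sum.atLeastLessThan_concat atLeast0LessThan[symmetric])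
  also have "(\<Sum>k\<in>{0..<M}. min 2 (s^k * sqrt Nr)) \<le> real (card {0..<M}) * 2"
    by (rule sum_bounded_above) simp
  also have "(\<Sum>k\<in>{M..<T}. min 2 (s^k * sqrt Nr)) \<le> (\<Sum>k\<in>{M..<T}. s^(k - M))"
  proof (rule sum_mono)
    fix k assume k: "k \<in> {M..<T}"
    then have "M = K0" by (auto simp: M_def)
    then have kk: "K0 \<le> k" using k by simp
    have "s^k * sqrt Nr = s^(k - K0) * (s ^ K0 * sqrt Nr)"
      using kk by (simp add: power_add[symmetric])
    also have "\<dots> \<le> s^(k - K0)" using sK0 s0 by (simp add: mult_left_le)
    finally show "min 2 (s^k * sqrt Nr) \<le> s^(k - M)" using \<open>M = K0\<close> by simp
  qed
  also have "(\<Sum>k\<in>{M..<T}. s^(k - M)) = (\<Sum>j\<in>{0..<T - M}. s^j)"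
  proof -
    have "{M..<T} = {0 + M..<(T - M) + M}" by (simp add: M_def)
    have "(\<Sum>k\<in>{0 + M..<(T - M) + M}. s^(k - M)) = (\<Sum>i\<in>{0..<T - M}. s^(i + M - M))"
      by (rule sum.shift_bounds_nat_ivl)
    then show ?thesis using \<open>{M..<T} = {0 + M..<(T - M) + M}\<close> by simp
  qed
  also have "\<dots> \<le> 1 / (1 - s)" using geom_le[OF s0 s1] by (simp add: atLeast0LessThan)
  finally have "(\<Sum>k<T. min 2 (s^k * sqrt Nr)) \<le> real M * 2 + 1 / (1 - s)" by simp
  moreover have "real M \<le> \<kappa> + 1" using K0le by (simp add: M_def)
  ultimately show ?thesis by (simp add: \<kappa>_def)
qed




context pdset
begin

lemma main_bound:
  assumes T2: "T \<ge> 2" and sig1: "sigma2 W < 1"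
  shows "(\<Sum>j\<in>UNIV. fi j (pd_estimate W R \<eta> \<alpha> Df g Dg i T)) / real CARD('n)
           - (\<Sum>j\<in>UNIV. fi j xstar) / real CARD('n)
         \<le> R * (1 + 5 / 2 * real CARD('m) * L\<^sup>2 * R\<^sup>2
                 + 20 * L\<^sup>2 * (1 + real CARD('n) * real CARD('m) powr (3 / 2) * L * R / \<eta>)\<^sup>2
                   * (ln (real T * sqrt (real CARD('n) * real T)) / (1 - sigma2 W)) powr (3 / 2))
             * ln (real T) / (sqrt (real T) - 1)"
proof -
  define N where "N = real CARD('n)"
  define m where "m = real CARD('m)"
  define Sa where "Sa = (\<Sum>t<T. \<alpha> t)"
  define A2 where "A2 = (\<Sum>t<T. (\<alpha> t)\<^sup>2)"
  define S where "S = (\<Sum>k<T. cc k)"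
  define Hs where "Hs = (\<Sum>t<T. 1 / (real t + 1))"
  define l where "l = ln (real T)"
  define est where "est = pd_estimate W R \<eta> \<alpha> Df g Dg i T"
  define Q where "Q = 1 + N * m powr (3 / 2) * L * R / \<eta>"
  define X where "X = ln (real T * sqrt (N * real T)) / (1 - sigma2 W)"
  define Ctot where "Ctot = 1 + 5 / 2 * m * L\<^sup>2 * R\<^sup>2 + 20 * L\<^sup>2 * Q\<^sup>2 * X powr (3 / 2)"
  have N1: "N \<ge> 1" by (simp add: N_def)
  have m1: "m \<ge> 1" by (simp add: m_def)
  have l23: "l \<ge> 2/3"
  proof -
    have "ln 2 \<le> ln (real T)" using T2 by simp
    then show ?thesis using ln2_ge_two_thirds by (simp add: l_def)
  qed
  have sqT: "sqrt (real T) - 1 > 0" using T2 by simp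
  have Sa_ge: "Sa \<ge> 2 * R * (sqrt (real T) - 1)"
  proof -
    have "Sa = R * (\<Sum>t<T. 1 / sqrt (real t + 1))" by (simp add: Sa_def alpha_def sum_distrib_left)
    moreover have "2 * (sqrt (real T) - 1) \<le> (\<Sum>t<T. 1 / sqrt (real t + 1))"
    proof -
      have "sqrt (real T) \<le> sqrt (real T + 1)" by simp
      then show ?thesis using sqrt_sum_bound[of T] by argo
    qed
    ultimately show ?thesis using R_pos by (simp add: mult_left_mono)
  qed
  have Sa_pos: "Sa > 0" using Sa_ge sqT R_pos by (smt (verit) mult_pos_pos)
  have A2_eq: "A2 = R\<^sup>2 * Hs"
  proof -
    have "(\<alpha> t)\<^sup>2 = R\<^sup>2 * (1 / (real t + 1))" for t
      by (simp add: alpha_def power_divide)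
    then show ?thesis by (simp add: A2_def Hs_def sum_distrib_left)
  qed
  have Hs_le: "Hs \<le> 1 + l" using H_bound[of T] T2 by (simp add: Hs_def l_def)
  have Hs_nn: "Hs \<ge> 0" by (simp add: Hs_def sum_nonneg)
  have wsum: "(\<Sum>t<T. \<alpha> t / Sa) = 1" using Sa_pos by (simp add: Sa_def sum_divide_distrib[symmetric])
  have w0: "\<alpha> t / Sa \<ge> 0" for t using alpha_pos[of t] Sa_pos by simp
  have est_eq: "est = (\<Sum>t<T. (\<alpha> t / Sa) *\<^sub>R xs t i)"
    by (simp add: est_def pd_estimate_def Sa_def xs_def scaleR_sum_right divide_inverse mult.commute)
  have jen: "fi j est \<le> (\<Sum>t<T. (\<alpha> t / Sa) * fi j (xs t i))" for j
    unfolding est_eq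
    by (rule convex_on_sum[OF _ _ f_convex]) (use T2 wsum w0 xs_in in auto)
  have stepB: "fi j (xs t i) \<le> fi j (xs t j) + L * (2 * Dd t)" for t j
  proof -
    have "fi j (xs t i) \<le> fi j (xs t j) + L * norm (xs t j - xs t i)" by (rule flip[OF xs_in xs_in])
    also have "\<dots> \<le> fi j (xs t j) + L * (2 * Dd t)"
      using pair_bound[of t j i] L0 by (simp add: mult_left_mono)
    finally show ?thesis .
  qed
  have chain1: "(\<Sum>j\<in>UNIV. fi j est) \<le> (\<Sum>t<T. (\<alpha> t / Sa) * (\<Sum>j\<in>UNIV. fi j (xs t j) + L * (2 * Dd t)))"
  proof -
    have "(\<Sum>j\<in>UNIV. fi j est) \<le> (\<Sum>j\<in>UNIV. \<Sum>t<T. (\<alpha> t / Sa) * fi j (xs t i))"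
      by (intro sum_mono jen)
    also have "\<dots> \<le> (\<Sum>j\<in>UNIV. \<Sum>t<T. (\<alpha> t / Sa) * (fi j (xs t j) + L * (2 * Dd t)))"
      using stepB w0 by (intro sum_mono mult_left_mono) auto
    also have "\<dots> = (\<Sum>t<T. \<Sum>j\<in>UNIV. (\<alpha> t / Sa) * (fi j (xs t j) + L * (2 * Dd t)))"
      by (rule sum.swap)
    also have "\<dots> = (\<Sum>t<T. (\<alpha> t / Sa) * (\<Sum>j\<in>UNIV. fi j (xs t j) + L * (2 * Dd t)))"
      by (simp add: sum_distrib_left)
    finally show ?thesis .
  qed
  have chain2: "(\<Sum>j\<in>UNIV. fi j xstar) = (\<Sum>t<T. (\<alpha> t / Sa) * (\<Sum>j\<in>UNIV. fi j xstar))"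
  proof -
    have "(\<Sum>t<T. (\<alpha> t / Sa) * (\<Sum>j\<in>UNIV. fi j xstar)) = (\<Sum>t<T. \<alpha> t / Sa) * (\<Sum>j\<in>UNIV. fi j xstar)"
      by (rule sum_distrib_right[symmetric])
    then show ?thesis using wsum by simp
  qed
  have inner_eq: "(\<Sum>j\<in>UNIV. fi j (xs t j) + L * (2 * Dd t)) - (\<Sum>j\<in>UNIV. fi j xstar) = Fd t + N * (L * (2 * Dd t))" for t
    by (simp add: Fd_def N_def sum.distrib sum_subtractf)
  have diff: "(\<Sum>j\<in>UNIV. fi j est) - (\<Sum>j\<in>UNIV. fi j xstar) \<le> (\<Sum>t<T. (\<alpha> t / Sa) * (Fd t + N * (L * (2 * Dd t))))"
  proof -
    have "(\<Sum>j\<in>UNIV. fi j est) - (\<Sum>j\<in>UNIV. fi j xstar) \<le>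
          (\<Sum>t<T. (\<alpha> t / Sa) * (\<Sum>j\<in>UNIV. fi j (xs t j) + L * (2 * Dd t))) - (\<Sum>t<T. (\<alpha> t / Sa) * (\<Sum>j\<in>UNIV. fi j xstar))"
      using chain1 chain2 by linarith
    also have "\<dots> = (\<Sum>t<T. (\<alpha> t / Sa) * ((\<Sum>j\<in>UNIV. fi j (xs t j) + L * (2 * Dd t)) - (\<Sum>j\<in>UNIV. fi j xstar)))"
      by (simp add: sum_subtractf right_diff_distrib)
    also have "\<dots> = (\<Sum>t<T. (\<alpha> t / Sa) * (Fd t + N * (L * (2 * Dd t))))"
      by (simp only: inner_eq)
    finally show ?thesis .
  qed
  have "(\<Sum>t<T. (\<alpha> t / Sa) * (Fd t + N * (L * (2 * Dd t)))) = ((\<Sum>t<T. \<alpha> t * Fd t) + 2 * N * L * (\<Sum>t<T. \<alpha> t * Dd t)) / Sa"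
    by (simp add: sum_divide_distrib sum.distrib sum_distrib_left add_divide_distrib algebra_simps)
  also have "\<dots> \<le> (N * (R\<^sup>2 + C1 * A2) / 2 + 2 * N * L * (Gx * A2 * S)) / Sa"
  proof -
    have "(\<Sum>t<T. \<alpha> t * Fd t) \<le> N * (R\<^sup>2 + C1 * A2) / 2" using opt_sum by (simp add: N_def A2_def)
    moreover have "2 * N * L * (\<Sum>t<T. \<alpha> t * Dd t) \<le> 2 * N * L * (Gx * A2 * S)"
      using cons_sum[of T] L0 N1 by (intro mult_left_mono) (auto simp: A2_def S_def)
    ultimately show ?thesis using Sa_pos by (intro divide_right_mono) auto
  qed
  finally have main1: "(\<Sum>j\<in>UNIV. fi j est) - (\<Sum>j\<in>UNIV. fi j xstar) \<le> N * ((R\<^sup>2 + C1 * A2) / 2 + 2 * L * Gx * A2 * S) / Sa"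
    using diff by (simp add: algebra_simps)
  define Q0 where "Q0 = (R\<^sup>2 + C1 * A2) / 2 + 2 * L * Gx * A2 * S"
  have S_nn: "S \<ge> 0" using cc_nn by (simp add: S_def sum_nonneg)
  have C1_nn: "C1 \<ge> 0" by (simp add: C1_def)
  have A2_nn: "A2 \<ge> 0" by (simp add: A2_def sum_nonneg)
  have Q0_nn: "Q0 \<ge> 0" using S_nn C1_nn A2_nn L0 Gx_nn by (simp add: Q0_def)
  have lhs: "(\<Sum>j\<in>UNIV. fi j est) / N - (\<Sum>j\<in>UNIV. fi j xstar) / N \<le> Q0 / Sa"
  proof -
    have "(\<Sum>j\<in>UNIV. fi j est) / N - (\<Sum>j\<in>UNIV. fi j xstar) / N = ((\<Sum>j\<in>UNIV. fi j est) - (\<Sum>j\<in>UNIV. fi j xstar)) / N"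
      by (simp add: diff_divide_distrib)
    also have "\<dots> \<le> (N * Q0 / Sa) / N" using main1 N1 by (intro divide_right_mono) (auto simp: Q0_def)
    also have "\<dots> = Q0 / Sa" using N1 by simp
    finally show ?thesis .
  qed
  also have "Q0 / Sa \<le> Q0 / (2 * R * (sqrt (real T) - 1))"
  proof -
    have pp: "0 < Sa * (2 * R * (sqrt (real T) - 1))" using Sa_pos R_pos sqT by simp
    show ?thesis by (rule divide_left_mono[OF Sa_ge Q0_nn pp])
  qed
  also have "\<dots> \<le> R * Ctot * l / (sqrt (real T) - 1)"
  proof -
    have Q1: "Q \<ge> 1"
      using L0 R0 eta_pos N1 m1 by (simp add: Q_def)
    have mp: "m \<le> m powr (3/2)"
    proof -
      have "m powr 1 \<le> m powr (3/2)" using m1 by (intro powr_mono) auto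
      then show ?thesis using m1 by simp
    qed
    have Gx_le: "Gx \<le> 2 * L * Q"
    proof -
      have "m * (L * R / \<eta>) \<le> N * m powr (3/2) * (L * R / \<eta>)"
      proof -
        have "m \<le> N * m powr (3/2)" using mp N1 m1 by (smt (verit) mult_le_cancel_right1 powr_ge_zero)
        then show ?thesis using L0 R0 eta_pos by (intro mult_right_mono) auto
      qed
      moreover have "Q = 1 + N * m powr (3/2) * (L * R / \<eta>)" by (simp add: Q_def)
      moreover have "0 \<le> m * (L * R / \<eta>)" using m1 L0 R0 eta_pos by simp
      ultimately have h: "1 + 2 * (m * (L * R / \<eta>)) \<le> 2 * Q" by linarith
      have eq: "Gx = L * (1 + 2 * (m * (L * R / \<eta>)))" by (simp add: Gx_def m_def algebra_simps)
      have h2: "L * (1 + 2 * (m * (L * R / \<eta>))) \<le> L * (2 * Q)" using mult_left_mono[OF h L0] .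
      have "2 * L * Q = L * (2 * Q)" by simp
      then show ?thesis using h2 eq by linarith
    qed
    have sig0: "sigma2 W \<ge> 0" using sig_nn by (simp add: sig_def)
    define u where "u = 1 / (1 - sigma2 W)"
    define kap where "kap = ln (sqrt N) / (1 - sigma2 W)"
    have u1: "u \<ge> 1" using sig0 sig1 by (simp add: u_def)
    have kap0: "kap \<ge> 0" using N1 sig1 by (simp add: kap_def)
    have S_le0: "S \<le> 2 * (kap + 1) + u"
      using S_bound[OF sig0 sig1 N1, of T] by (simp add: S_def cc_def sig_def kap_def u_def N_def)
    have X_eq: "X = (3/2 * l + ln (sqrt N)) * u"
    proof -
      have "ln (real T * sqrt (N * real T)) = l + (ln N + l) / 2"
        using T2 N1 by (simp add: l_def ln_mult ln_sqrt)
      also have "\<dots> = 3/2 * l + ln (sqrt N)" using N1 by (simp add: ln_sqrt field_simps)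
      finally show ?thesis by (simp add: X_def u_def)
    qed
    have X_ge: "X \<ge> u + kap"
    proof -
      have "(3/2 * l) * u \<ge> 1 * u" using l23 u1 by (intro mult_right_mono) auto
      moreover have "ln (sqrt N) * u = kap" by (simp add: kap_def u_def)
      ultimately show ?thesis unfolding X_eq by (simp add: algebra_simps)
    qed
    have X1: "X \<ge> 1" using X_ge u1 kap0 by linarith
    have Xp: "X \<le> X powr (3/2)"
    proof -
      have "X powr 1 \<le> X powr (3/2)" using X1 by (intro powr_mono) auto
      then show ?thesis using X1 by simp
    qed
    have S_le: "S \<le> 4 * X powr (3/2) - 1/2" using S_le0 X_ge Xp u1 kap0 by argo
    define P where "P = L\<^sup>2 * Q\<^sup>2"
    have P0: "P \<ge> 0" by (simp add: P_def)
    have Gx2: "Gx\<^sup>2 \<le> 4 * P"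
    proof -
      have "Gx\<^sup>2 \<le> (2 * L * Q)\<^sup>2" using Gx_le Gx_nn by (intro power_mono) auto
      then show ?thesis by (simp add: P_def power_mult_distrib)
    qed
    have LGS: "2 * L * Gx * S \<le> 16 * P * X powr (3/2) - 2 * P"
    proof -
      have "2 * L * Gx * S \<le> 2 * L * (2 * L * Q) * S"
        using Gx_le L0 S_nn by (intro mult_right_mono mult_left_mono) auto
      also have "\<dots> = 4 * (L\<^sup>2 * Q) * S" by (simp add: power2_eq_square)
      also have "\<dots> \<le> 4 * P * S"
      proof -
        have "Q \<le> Q\<^sup>2" using Q1 by (simp add: power2_eq_square)
        then have "L\<^sup>2 * Q \<le> L\<^sup>2 * Q\<^sup>2" by (simp add: mult_left_mono)
        then have "(L\<^sup>2 * Q) * S \<le> P * S" using S_nn unfolding P_def by (rule mult_right_mono)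
        then show ?thesis by simp
      qed
      also have "\<dots> \<le> 4 * P * (4 * X powr (3/2) - 1/2)" using S_le P0 by (intro mult_left_mono) auto
      also have "\<dots> = 16 * P * X powr (3/2) - 2 * P" by (simp add: algebra_simps)
      finally show ?thesis .
    qed
    define B where "B = 2 * m * L\<^sup>2 * R\<^sup>2 + 16 * P * X powr (3/2)"
    have B_ge: "C1 / 2 + 2 * L * Gx * S \<le> B"
      using Gx2 LGS unfolding B_def C1_def m_def by argo
    have B0: "B \<ge> 0" using P0 m1 by (simp add: B_def)
    have HB: "Hs * (C1 / 2 + 2 * L * Gx * S) \<le> (5/2 * l) * B"
    proof -
      have "C1 / 2 + 2 * L * Gx * S \<ge> 0" using C1_nn L0 Gx_nn S_nn by simp
      then have "Hs * (C1 / 2 + 2 * L * Gx * S) \<le> Hs * B" using B_ge Hs_nn by (intro mult_left_mono) auto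
      also have "\<dots> \<le> (5/2 * l) * B" using Hs_le l23 B0 by (intro mult_right_mono) auto
      finally show ?thesis .
    qed
    have key: "1/2 + Hs * (C1 / 2 + 2 * L * Gx * S) \<le> 2 * Ctot * l"
      using HB l23 by (simp add: B_def Ctot_def P_def algebra_simps)
    have Q0_eq: "Q0 = R\<^sup>2 * (1/2 + Hs * (C1 / 2 + 2 * L * Gx * S))"
      by (simp add: Q0_def A2_eq algebra_simps)
    have "Q0 \<le> R\<^sup>2 * (2 * Ctot * l)" unfolding Q0_eq using key by (intro mult_left_mono) auto
    then have "Q0 / (2 * R * (sqrt (real T) - 1)) \<le> R\<^sup>2 * (2 * Ctot * l) / (2 * R * (sqrt (real T) - 1))"
      using R_pos sqT by (intro divide_right_mono) auto
    also have "\<dots> = R * Ctot * l / (sqrt (real T) - 1)"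
      using R_pos sqT by (simp add: power2_eq_square field_simps)
    finally show ?thesis .
  qed
  finally show ?thesis by (simp add: N_def m_def est_def Ctot_def Q_def X_def l_def)
qed

end

theorem theorem2:
  fixes fi :: "'n::finite \<Rightarrow> 'a::euclidean_space \<Rightarrow> real"
    and Df :: "'n \<Rightarrow> 'a \<Rightarrow> 'a"
    and g :: "'m::finite \<Rightarrow> 'a \<Rightarrow> real"
    and Dg :: "'m \<Rightarrow> 'a \<Rightarrow> 'a"
    and W :: "real^'n^'n"
    and E :: "('n \<times> 'n) set"
    and X :: "'a set"
    and R L \<eta> :: real
    and \<alpha> :: "nat \<Rightarrow> real"
    and xstar :: 'a
    and i :: 'n
    and T :: nat
  defines "X \<equiv> {x. \<forall>k. g k x \<le> 0}"
  assumes X_nonempty: "X \<noteq> {}"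
    and X_convex: "convex X"
    and X_compact: "compact X"
    and R_def: "R = Sup (norm ` X)"
    and slater: "\<exists>xt. \<forall>k. g k xt < 0"
    and f_convex: "\<And>j. convex_on (cball 0 R) (fi j)"
    and g_convex: "\<And>k. convex_on (cball 0 R) (g k)"
    and Df_subgrad: "\<And>j x y. x \<in> cball 0 R \<Longrightarrow> y \<in> cball 0 R \<Longrightarrow>
                       fi j y \<ge> fi j x + Df j x \<bullet> (y - x)"
    and Dg_subgrad: "\<And>k x y. x \<in> cball 0 R \<Longrightarrow> y \<in> cball 0 R \<Longrightarrow>
                       g k y \<ge> g k x + Dg k x \<bullet> (y - x)"
    and Df_bound: "\<And>j x. x \<in> cball 0 R \<Longrightarrow> norm (Df j x) \<le> L"
    and Dg_bound: "\<And>k x. x \<in> cball 0 R \<Longrightarrow> norm (Dg k x) \<le> L"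
    and E_sym: "sym E"
    and E_connected: "\<And>a b. (a, b) \<in> E\<^sup>*"
    and W_nonneg_entries: "\<And>a b. W $ a $ b \<ge> 0"
    and W_rows: "\<And>a. (\<Sum>b\<in>UNIV. W $ a $ b) = 1"
    and W_cols: "\<And>b. (\<Sum>a\<in>UNIV. W $ a $ b) = 1"
    and W_edge: "\<And>a b. (a, b) \<in> E \<Longrightarrow> W $ a $ b > 0"
    and W_nonedge: "\<And>a b. (a, b) \<notin> E \<Longrightarrow> W $ a $ b = 0"
    and sigma2_lt1: "sigma2 W < 1"
    and xstar_opt: "xstar \<in> X" "\<And>x. x \<in> X \<Longrightarrow> (\<Sum>j\<in>UNIV. fi j xstar) / real CARD('n) \<le> (\<Sum>j\<in>UNIV. fi j x) / real CARD('n)"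
    and alpha_def: "\<And>t. \<alpha> t = R / sqrt (real t + 1)"
    and eta_pos: "\<eta> > 0"
    and eta_alpha: "\<And>t. \<eta> * \<alpha> t \<le> 1 / 2"
    and T_ge: "T \<ge> 2"
  shows "(\<Sum>j\<in>UNIV. fi j (pd_estimate W R \<eta> \<alpha> Df g Dg i T)) / real CARD('n)
           - (\<Sum>j\<in>UNIV. fi j xstar) / real CARD('n)
         \<le> R * (1 + 5 / 2 * real CARD('m) * L\<^sup>2 * R\<^sup>2
                 + 20 * L\<^sup>2 * (1 + real CARD('n) * real CARD('m) powr (3 / 2) * L * R / \<eta>)\<^sup>2
                   * (ln (real T * sqrt (real CARD('n) * real T)) / (1 - sigma2 W)) powr (3 / 2))
             * ln (real T) / (sqrt (real T) - 1)"
proof -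
  have Xdef: "X = {x. \<forall>k. g k x \<le> 0}" using \<open>X \<equiv> {x. \<forall>k. g k x \<le> 0}\<close> by simp
  have bX: "bounded X" using X_compact by (rule compact_imp_bounded)
  then obtain a where a: "\<And>x. x \<in> X \<Longrightarrow> norm x \<le> a" by (auto simp: bounded_iff)
  have bdd: "bdd_above (norm ` X)" using a by (auto intro!: bdd_aboveI)
  have Xle: "norm x \<le> R" if "x \<in> X" for x
    unfolding R_def using bdd that by (intro cSup_upper) auto
  have Xball: "norm x \<le> R" if "\<forall>k. g k x \<le> 0" for x using Xle that by (simp add: Xdef)
  have xsf: "g k xstar \<le> 0" for k using xstar_opt(1) by (simp add: Xdef)
  have R0: "R \<ge> 0" using Xle[OF xstar_opt(1)] norm_ge_zero[of xstar] by linarith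
  show ?thesis
  proof (cases "R = 0")
    case True
    have "norm xstar \<le> 0" using Xle[OF xstar_opt(1)] True by simp
    then have xs0: "xstar = 0" by simp
    have "\<alpha> t = 0" for t using True by (simp add: alpha_def)
    then have "pd_estimate W R \<eta> \<alpha> Df g Dg i T = 0" by (simp add: pd_estimate_def)
    then show ?thesis using True xs0 by simp
  next
    case False
    then have Rp: "R > 0" using R0 by simp
    interpret pdset W fi Df g Dg R L \<eta> \<alpha> xstar
    proof (unfold_locales)
      show "\<And>a b. 0 \<le> W $ a $ b" by (rule W_nonneg_entries)
      show "\<And>a. (\<Sum>b\<in>UNIV. W $ a $ b) = 1" by (rule W_rows)
      show "\<And>b. (\<Sum>a\<in>UNIV. W $ a $ b) = 1" by (rule W_cols)
    qed (use Rp Xball xsf f_convex Df_subgrad Dg_subgrad Df_bound Dg_bound alpha_def eta_pos eta_alpha in auto)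
    show ?thesis using main_bound[OF T_ge sigma2_lt1] .
  qed
qed

end
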